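(* Let $K$ be an algebraically closed field, $\mathcal{T}$ a $\operatorname{Hom}$-finite Krull–Schmidt triangulated $K$-category with Jacobson radical $\mathcal{J}$, $\mathcal{I}$ an ideal, and $f:X\to Y$ a morphism between indecomposable objects $X$ and $Y$. Then (1) $f$ is left $\mathcal{I}$-irreducible if and only if $f\in\mathcal{I}(X,Y)\setminus(\mathcal{J}\mathcal{I})(X,Y)$; (2) $f$ is right $\mathcal{I}$-irreducible if and only if $f\in\mathcal{I}(X,Y)\setminus(\mathcal{I}\mathcal{J})(X,Y)$; (3) $f$ is $\mathcal{I}$-irreducible if and only if $f\in\mathcal{I}(X,Y)\setminus\big((\mathcal{J}\mathcal{I})(X,Y)\cup(\mathcal{I}\mathcal{J})(X,Y)\big)$.
   Context: Composition of $h_1$ then $h_2$ is $h_2h_1$. An ideal: subgroups $\mathcal{I}(X,Y)\subseteq\operatorname{Hom}(X,Y)$ closed under composition. For ideals $\mathcal{A},\mathcal{B}$, $\mathcal{A}\mathcal{B}$ is the ideal of finite sums of composites $ab$ with $a\in\mathcal{A}$, $b\in\mathcal{B}$ ($b$ applied first). $h$ is left $\mathcal{I}$-irreducible if $h\in\mathcal{I}$ and whenever $h=h_2h_1$ with $h_1\in\mathcal{I}$, $h_2$ is split epic; right $\mathcal{I}$-irreducible if $h\in\mathcal{I}$ and whenever $h=h_2h_1$ with $h_2\in\mathcal{I}$, $h_1$ is split monic; $\mathcal{I}$-irreducible if both. *)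

theory Defs
  imports "HOL-Computational_Algebra.Polynomial"
begin

(* A (small-presentation) K-linear category with shift and a class of triangles.
   Objects of type 'o, morphisms of type 'm, scalars of type 'k.
   cmp g f  is the composite "f then g", i.e. g f. *)
record ('o, 'm, 'k) tcat =
  Obj   :: "'o set"
  Hom   :: "'o \<Rightarrow> 'o \<Rightarrow> 'm set"
  cmp   :: "'m \<Rightarrow> 'm \<Rightarrow> 'm"
  idm   :: "'o \<Rightarrow> 'm"
  add   :: "'m \<Rightarrow> 'm \<Rightarrow> 'm"
  zer   :: "'o \<Rightarrow> 'o \<Rightarrow> 'm"
  smul  :: "'k \<Rightarrow> 'm \<Rightarrow> 'm"
  shO   :: "'o \<Rightarrow> 'o"
  shM   :: "'m \<Rightarrow> 'm"
  Tri   :: "('o \<times> 'o \<times> 'o \<times> 'm \<times> 'm \<times> 'm) set"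

definition neg :: "('o, 'm, 'k::field, 'z) tcat_scheme \<Rightarrow> 'm \<Rightarrow> 'm" where
  "neg C f = smul C (-1) f"

definition is_category :: "('o, 'm, 'k, 'z) tcat_scheme \<Rightarrow> bool" where
  "is_category C \<longleftrightarrow>
     (\<forall>X Y. (X \<notin> Obj C \<or> Y \<notin> Obj C) \<longrightarrow> Hom C X Y = {}) \<and>
     (\<forall>X Y X' Y'. Hom C X Y \<inter> Hom C X' Y' \<noteq> {} \<longrightarrow> X = X' \<and> Y = Y') \<and>
     (\<forall>X\<in>Obj C. idm C X \<in> Hom C X X) \<and>
     (\<forall>X Y Z f g. f \<in> Hom C X Y \<longrightarrow> g \<in> Hom C Y Z \<longrightarrow> cmp C g f \<in> Hom C X Z) \<and>
     (\<forall>X Y f. f \<in> Hom C X Y \<longrightarrow> cmp C (idm C Y) f = f \<and> cmp C f (idm C X) = f) \<and>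
     (\<forall>W X Y Z f g h. f \<in> Hom C W X \<longrightarrow> g \<in> Hom C X Y \<longrightarrow> h \<in> Hom C Y Z \<longrightarrow>
        cmp C h (cmp C g f) = cmp C (cmp C h g) f)"

definition is_klinear :: "('o, 'm, 'k::field, 'z) tcat_scheme \<Rightarrow> bool" where
  "is_klinear C \<longleftrightarrow>
     (\<forall>X\<in>Obj C. \<forall>Y\<in>Obj C.
        zer C X Y \<in> Hom C X Y \<and>
        (\<forall>f\<in>Hom C X Y. \<forall>g\<in>Hom C X Y. add C f g \<in> Hom C X Y) \<and>
        (\<forall>c. \<forall>f\<in>Hom C X Y. smul C c f \<in> Hom C X Y) \<and>
        (\<forall>f\<in>Hom C X Y. \<forall>g\<in>Hom C X Y. \<forall>h\<in>Hom C X Y.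
            add C (add C f g) h = add C f (add C g h)) \<and>
        (\<forall>f\<in>Hom C X Y. \<forall>g\<in>Hom C X Y. add C f g = add C g f) \<and>
        (\<forall>f\<in>Hom C X Y. add C f (zer C X Y) = f) \<and>
        (\<forall>f\<in>Hom C X Y. add C f (neg C f) = zer C X Y) \<and>
        (\<forall>c. \<forall>f\<in>Hom C X Y. \<forall>g\<in>Hom C X Y.
            smul C c (add C f g) = add C (smul C c f) (smul C c g)) \<and>
        (\<forall>c d. \<forall>f\<in>Hom C X Y. smul C (c + d) f = add C (smul C c f) (smul C d f)) \<and>
        (\<forall>c d. \<forall>f\<in>Hom C X Y. smul C c (smul C d f) = smul C (c * d) f) \<and>
        (\<forall>f\<in>Hom C X Y. smul C 1 f = f)) \<and>
     (\<forall>X Y Z f f' g. f \<in> Hom C X Y \<longrightarrow> f' \<in> Hom C X Y \<longrightarrow> g \<in> Hom C Y Z \<longrightarrow>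
        cmp C g (add C f f') = add C (cmp C g f) (cmp C g f')) \<and>
     (\<forall>X Y Z f g g'. f \<in> Hom C X Y \<longrightarrow> g \<in> Hom C Y Z \<longrightarrow> g' \<in> Hom C Y Z \<longrightarrow>
        cmp C (add C g g') f = add C (cmp C g f) (cmp C g' f)) \<and>
     (\<forall>X Y Z f g c. f \<in> Hom C X Y \<longrightarrow> g \<in> Hom C Y Z \<longrightarrow>
        cmp C g (smul C c f) = smul C c (cmp C g f) \<and>
        cmp C (smul C c g) f = smul C c (cmp C g f))"

fun lincomb :: "('o, 'm, 'k, 'z) tcat_scheme \<Rightarrow> 'o \<Rightarrow> 'o \<Rightarrow> ('k \<times> 'm) list \<Rightarrow> 'm" where
  "lincomb C X Y [] = zer C X Y"
| "lincomb C X Y ((c, b) # xs) = add C (smul C c b) (lincomb C X Y xs)"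

fun msum :: "('o, 'm, 'k, 'z) tcat_scheme \<Rightarrow> 'o \<Rightarrow> 'o \<Rightarrow> 'm list \<Rightarrow> 'm" where
  "msum C X Y [] = zer C X Y"
| "msum C X Y (f # fs) = add C f (msum C X Y fs)"

definition hom_finite :: "('o, 'm, 'k, 'z) tcat_scheme \<Rightarrow> bool" where
  "hom_finite C \<longleftrightarrow> (\<forall>X\<in>Obj C. \<forall>Y\<in>Obj C. \<exists>bs. set bs \<subseteq> Hom C X Y \<and>
      (\<forall>f\<in>Hom C X Y. \<exists>cs. length cs = length bs \<and> f = lincomb C X Y (zip cs bs)))"

definition is_dsum :: "('o, 'm, 'k, 'z) tcat_scheme \<Rightarrow> 'o \<Rightarrow> 'o list \<Rightarrow> 'm list \<Rightarrow> 'm list \<Rightarrow> bool" where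
  "is_dsum C S Xs ins prs \<longleftrightarrow> S \<in> Obj C \<and>
     length ins = length Xs \<and> length prs = length Xs \<and>
     (\<forall>k<length Xs. Xs ! k \<in> Obj C \<and> ins ! k \<in> Hom C (Xs ! k) S \<and> prs ! k \<in> Hom C S (Xs ! k)) \<and>
     (\<forall>k<length Xs. \<forall>l<length Xs.
        cmp C (prs ! k) (ins ! l) = (if k = l then idm C (Xs ! k) else zer C (Xs ! l) (Xs ! k))) \<and>
     msum C S S (map (\<lambda>k. cmp C (ins ! k) (prs ! k)) [0..<length Xs]) = idm C S"

definition is_additive :: "('o, 'm, 'k, 'z) tcat_scheme \<Rightarrow> bool" where
  "is_additive C \<longleftrightarrow> (\<exists>Z. is_dsum C Z [] [] []) \<and>
     (\<forall>X\<in>Obj C. \<forall>Y\<in>Obj C. \<exists>S ins prs. is_dsum C S [X, Y] ins prs)"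

definition is_iso :: "('o, 'm, 'k, 'z) tcat_scheme \<Rightarrow> 'o \<Rightarrow> 'o \<Rightarrow> 'm \<Rightarrow> bool" where
  "is_iso C X Y f \<longleftrightarrow> f \<in> Hom C X Y \<and>
     (\<exists>g\<in>Hom C Y X. cmp C g f = idm C X \<and> cmp C f g = idm C Y)"

definition local_end :: "('o, 'm, 'k::field, 'z) tcat_scheme \<Rightarrow> 'o \<Rightarrow> bool" where
  "local_end C X \<longleftrightarrow> X \<in> Obj C \<and> idm C X \<noteq> zer C X X \<and>
     (\<forall>f\<in>Hom C X X. is_iso C X X f \<or> is_iso C X X (add C (idm C X) (neg C f)))"

definition krull_schmidt :: "('o, 'm, 'k::field, 'z) tcat_scheme \<Rightarrow> bool" where
  "krull_schmidt C \<longleftrightarrow> (\<forall>X\<in>Obj C. \<exists>Xs ins prs. is_dsum C X Xs ins prs \<and>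
      (\<forall>A\<in>set Xs. local_end C A))"

definition indecomposable :: "('o, 'm, 'k, 'z) tcat_scheme \<Rightarrow> 'o \<Rightarrow> bool" where
  "indecomposable C X \<longleftrightarrow> X \<in> Obj C \<and> idm C X \<noteq> zer C X X \<and>
     (\<forall>A B ins prs. is_dsum C X [A, B] ins prs \<longrightarrow> idm C A = zer C A A \<or> idm C B = zer C B B)"

definition shift_ok :: "('o, 'm, 'k::field, 'z) tcat_scheme \<Rightarrow> bool" where
  "shift_ok C \<longleftrightarrow> bij_betw (shO C) (Obj C) (Obj C) \<and>
     (\<forall>X\<in>Obj C. \<forall>Y\<in>Obj C. bij_betw (shM C) (Hom C X Y) (Hom C (shO C X) (shO C Y))) \<and>
     (\<forall>X\<in>Obj C. shM C (idm C X) = idm C (shO C X)) \<and>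
     (\<forall>X Y Z f g. f \<in> Hom C X Y \<longrightarrow> g \<in> Hom C Y Z \<longrightarrow> shM C (cmp C g f) = cmp C (shM C g) (shM C f)) \<and>
     (\<forall>X Y f g c. f \<in> Hom C X Y \<longrightarrow> g \<in> Hom C X Y \<longrightarrow>
        shM C (add C f g) = add C (shM C f) (shM C g) \<and> shM C (smul C c f) = smul C c (shM C f))"

definition is_triangle :: "('o, 'm, 'k, 'z) tcat_scheme \<Rightarrow> 'o \<times> 'o \<times> 'o \<times> 'm \<times> 'm \<times> 'm \<Rightarrow> bool" where
  "is_triangle C t \<longleftrightarrow> (case t of (X, Y, Z, u, v, w) \<Rightarrow>
     X \<in> Obj C \<and> Y \<in> Obj C \<and> Z \<in> Obj C \<and> u \<in> Hom C X Y \<and> v \<in> Hom C Y Z \<and> w \<in> Hom C Z (shO C X))"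

definition tri_iso :: "('o, 'm, 'k, 'z) tcat_scheme \<Rightarrow> 'o \<times> 'o \<times> 'o \<times> 'm \<times> 'm \<times> 'm \<Rightarrow>
    'o \<times> 'o \<times> 'o \<times> 'm \<times> 'm \<times> 'm \<Rightarrow> bool" where
  "tri_iso C t t' \<longleftrightarrow> (case t of (X, Y, Z, u, v, w) \<Rightarrow> case t' of (X', Y', Z', u', v', w') \<Rightarrow>
     (\<exists>a b c. is_iso C X X' a \<and> is_iso C Y Y' b \<and> is_iso C Z Z' c \<and>
        cmp C b u = cmp C u' a \<and> cmp C c v = cmp C v' b \<and> cmp C (shM C a) w = cmp C w' c))"

definition triangulated_axioms :: "('o, 'm, 'k::field, 'z) tcat_scheme \<Rightarrow> bool" where
  "triangulated_axioms C \<longleftrightarrow>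
     \<comment> \<open>TR1: triangles, isomorphism closure, identity triangle, every morphism has a cone\<close>
     (\<forall>t\<in>Tri C. is_triangle C t) \<and>
     (\<forall>t\<in>Tri C. \<forall>t'. is_triangle C t' \<and> tri_iso C t t' \<longrightarrow> t' \<in> Tri C) \<and>
     (\<forall>X\<in>Obj C. \<forall>Z. is_dsum C Z [] [] [] \<longrightarrow>
        (X, X, Z, idm C X, zer C X Z, zer C Z (shO C X)) \<in> Tri C) \<and>
     (\<forall>X Y u. u \<in> Hom C X Y \<longrightarrow> (\<exists>Z v w. (X, Y, Z, u, v, w) \<in> Tri C)) \<and>
     \<comment> \<open>TR2: rotation\<close>
     (\<forall>X Y Z u v w. is_triangle C (X, Y, Z, u, v, w) \<longrightarrow>
        ((X, Y, Z, u, v, w) \<in> Tri C \<longleftrightarrow> (Y, Z, shO C X, v, w, neg C (shM C u)) \<in> Tri C)) \<and>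
     \<comment> \<open>TR3: morphisms of triangles\<close>
     (\<forall>X Y Z u v w X' Y' Z' u' v' w' a b.
        (X, Y, Z, u, v, w) \<in> Tri C \<longrightarrow> (X', Y', Z', u', v', w') \<in> Tri C \<longrightarrow>
        a \<in> Hom C X X' \<longrightarrow> b \<in> Hom C Y Y' \<longrightarrow> cmp C b u = cmp C u' a \<longrightarrow>
        (\<exists>c\<in>Hom C Z Z'. cmp C c v = cmp C v' b \<and> cmp C (shM C a) w = cmp C w' c)) \<and>
     \<comment> \<open>TR4: octahedral axiom\<close>
     (\<forall>X Y Z u v Z' j k X' l i Y' m n.
        (X, Y, Z', u, j, k) \<in> Tri C \<longrightarrow> (Y, Z, X', v, l, i) \<in> Tri C \<longrightarrow>
        (X, Z, Y', cmp C v u, m, n) \<in> Tri C \<longrightarrow>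
        (\<exists>f g. (Z', Y', X', f, g, cmp C (shM C j) i) \<in> Tri C \<and>
           cmp C f j = cmp C m v \<and> cmp C n f = k \<and> cmp C g m = l \<and>
           cmp C (shM C u) n = cmp C i g))"

definition hf_ks_triangulated_kcat :: "('o, 'm, 'k::field, 'z) tcat_scheme \<Rightarrow> bool" where
  "hf_ks_triangulated_kcat C \<longleftrightarrow> is_category C \<and> is_klinear C \<and> is_additive C \<and>
     hom_finite C \<and> krull_schmidt C \<and> shift_ok C \<and> triangulated_axioms C"

definition is_ideal :: "('o, 'm, 'k::field, 'z) tcat_scheme \<Rightarrow> ('o \<Rightarrow> 'o \<Rightarrow> 'm set) \<Rightarrow> bool" where
  "is_ideal C I \<longleftrightarrow> (\<forall>X Y. I X Y \<subseteq> Hom C X Y) \<and>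
     (\<forall>X\<in>Obj C. \<forall>Y\<in>Obj C. zer C X Y \<in> I X Y \<and>
        (\<forall>f\<in>I X Y. \<forall>g\<in>I X Y. add C f g \<in> I X Y) \<and> (\<forall>f\<in>I X Y. neg C f \<in> I X Y)) \<and>
     (\<forall>W X Y Z h f g. h \<in> Hom C W X \<longrightarrow> f \<in> I X Y \<longrightarrow> g \<in> Hom C Y Z \<longrightarrow>
        cmp C g (cmp C f h) \<in> I W Z)"

definition jrad :: "('o, 'm, 'k::field, 'z) tcat_scheme \<Rightarrow> 'o \<Rightarrow> 'o \<Rightarrow> 'm set" where
  "jrad C X Y = {f \<in> Hom C X Y. \<forall>g\<in>Hom C Y X. is_iso C X X (add C (idm C X) (neg C (cmp C g f)))}"

text \<open>Product ideal AB: finite sums of composites a b with b in B applied first.\<close>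
inductive_set iprod :: "('o, 'm, 'k, 'z) tcat_scheme \<Rightarrow> ('o \<Rightarrow> 'o \<Rightarrow> 'm set) \<Rightarrow>
    ('o \<Rightarrow> 'o \<Rightarrow> 'm set) \<Rightarrow> 'o \<Rightarrow> 'o \<Rightarrow> 'm set"
  for C A B X Y where
  iprod_zero: "zer C X Y \<in> iprod C A B X Y"
| iprod_step: "\<lbrakk>s \<in> iprod C A B X Y; W \<in> Obj C; b \<in> B X W; a \<in> A W Y\<rbrakk>
      \<Longrightarrow> add C (cmp C a b) s \<in> iprod C A B X Y"

definition split_epi :: "('o, 'm, 'k, 'z) tcat_scheme \<Rightarrow> 'o \<Rightarrow> 'o \<Rightarrow> 'm \<Rightarrow> bool" where
  "split_epi C X Y h \<longleftrightarrow> h \<in> Hom C X Y \<and> (\<exists>s\<in>Hom C Y X. cmp C h s = idm C Y)"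

definition split_mono :: "('o, 'm, 'k, 'z) tcat_scheme \<Rightarrow> 'o \<Rightarrow> 'o \<Rightarrow> 'm \<Rightarrow> bool" where
  "split_mono C X Y h \<longleftrightarrow> h \<in> Hom C X Y \<and> (\<exists>r\<in>Hom C Y X. cmp C r h = idm C X)"

definition left_irr :: "('o, 'm, 'k, 'z) tcat_scheme \<Rightarrow> ('o \<Rightarrow> 'o \<Rightarrow> 'm set) \<Rightarrow> 'o \<Rightarrow> 'o \<Rightarrow> 'm \<Rightarrow> bool" where
  "left_irr C I X Y h \<longleftrightarrow> h \<in> I X Y \<and>
     (\<forall>Z h1 h2. Z \<in> Obj C \<longrightarrow> h1 \<in> I X Z \<longrightarrow> h2 \<in> Hom C Z Y \<longrightarrow> h = cmp C h2 h1 \<longrightarrow>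
        split_epi C Z Y h2)"

definition right_irr :: "('o, 'm, 'k, 'z) tcat_scheme \<Rightarrow> ('o \<Rightarrow> 'o \<Rightarrow> 'm set) \<Rightarrow> 'o \<Rightarrow> 'o \<Rightarrow> 'm \<Rightarrow> bool" where
  "right_irr C I X Y h \<longleftrightarrow> h \<in> I X Y \<and>
     (\<forall>Z h1 h2. Z \<in> Obj C \<longrightarrow> h1 \<in> Hom C X Z \<longrightarrow> h2 \<in> I Z Y \<longrightarrow> h = cmp C h2 h1 \<longrightarrow>
        split_mono C X Z h1)"

definition irr :: "('o, 'm, 'k, 'z) tcat_scheme \<Rightarrow> ('o \<Rightarrow> 'o \<Rightarrow> 'm set) \<Rightarrow> 'o \<Rightarrow> 'o \<Rightarrow> 'm \<Rightarrow> bool" where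
  "irr C I X Y h \<longleftrightarrow> left_irr C I X Y h \<and> right_irr C I X Y h"

end

theory Submission
  imports Defs
begin


locale kc =
  fixes C :: "('o, 'm, 'k::field, 'z) tcat_scheme"
  assumes cat: "is_category C" and lin: "is_klinear C"
begin

lemma cat_all: "(\<forall>X Y. (X \<notin> Obj C \<or> Y \<notin> Obj C) \<longrightarrow> Hom C X Y = {}) \<and>
     (\<forall>X Y X' Y'. Hom C X Y \<inter> Hom C X' Y' \<noteq> {} \<longrightarrow> X = X' \<and> Y = Y') \<and>
     (\<forall>X\<in>Obj C. idm C X \<in> Hom C X X) \<and>
     (\<forall>X Y Z f g. f \<in> Hom C X Y \<longrightarrow> g \<in> Hom C Y Z \<longrightarrow> cmp C g f \<in> Hom C X Z) \<and>
     (\<forall>X Y f. f \<in> Hom C X Y \<longrightarrow> cmp C (idm C Y) f = f \<and> cmp C f (idm C X) = f) \<and>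
     (\<forall>W X Y Z f g h. f \<in> Hom C W X \<longrightarrow> g \<in> Hom C X Y \<longrightarrow> h \<in> Hom C Y Z \<longrightarrow>
        cmp C h (cmp C g f) = cmp C (cmp C h g) f)"
  using cat unfolding is_category_def .

lemma hom_objs: "f \<in> Hom C X Y \<Longrightarrow> X \<in> Obj C \<and> Y \<in> Obj C"
  using cat_all[THEN conjunct1] by blast

lemma linA: "X \<in> Obj C \<Longrightarrow> Y \<in> Obj C \<Longrightarrow>
        zer C X Y \<in> Hom C X Y \<and>
        (\<forall>f\<in>Hom C X Y. \<forall>g\<in>Hom C X Y. add C f g \<in> Hom C X Y) \<and>
        (\<forall>c. \<forall>f\<in>Hom C X Y. smul C c f \<in> Hom C X Y) \<and>
        (\<forall>f\<in>Hom C X Y. \<forall>g\<in>Hom C X Y. \<forall>h\<in>Hom C X Y.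
            add C (add C f g) h = add C f (add C g h)) \<and>
        (\<forall>f\<in>Hom C X Y. \<forall>g\<in>Hom C X Y. add C f g = add C g f) \<and>
        (\<forall>f\<in>Hom C X Y. add C f (zer C X Y) = f) \<and>
        (\<forall>f\<in>Hom C X Y. add C f (neg C f) = zer C X Y) \<and>
        (\<forall>c. \<forall>f\<in>Hom C X Y. \<forall>g\<in>Hom C X Y.
            smul C c (add C f g) = add C (smul C c f) (smul C c g)) \<and>
        (\<forall>c d. \<forall>f\<in>Hom C X Y. smul C (c + d) f = add C (smul C c f) (smul C d f)) \<and>
        (\<forall>c d. \<forall>f\<in>Hom C X Y. smul C c (smul C d f) = smul C (c * d) f) \<and>
        (\<forall>f\<in>Hom C X Y. smul C 1 f = f)"
  proof -
  assume X: "X \<in> Obj C" and Y: "Y \<in> Obj C"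
  have "\<forall>X\<in>Obj C. \<forall>Y\<in>Obj C. zer C X Y \<in> Hom C X Y \<and>
        (\<forall>f\<in>Hom C X Y. \<forall>g\<in>Hom C X Y. add C f g \<in> Hom C X Y) \<and>
        (\<forall>c. \<forall>f\<in>Hom C X Y. smul C c f \<in> Hom C X Y) \<and>
        (\<forall>f\<in>Hom C X Y. \<forall>g\<in>Hom C X Y. \<forall>h\<in>Hom C X Y.
            add C (add C f g) h = add C f (add C g h)) \<and>
        (\<forall>f\<in>Hom C X Y. \<forall>g\<in>Hom C X Y. add C f g = add C g f) \<and>
        (\<forall>f\<in>Hom C X Y. add C f (zer C X Y) = f) \<and>
        (\<forall>f\<in>Hom C X Y. add C f (neg C f) = zer C X Y) \<and>
        (\<forall>c. \<forall>f\<in>Hom C X Y. \<forall>g\<in>Hom C X Y.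
            smul C c (add C f g) = add C (smul C c f) (smul C c g)) \<and>
        (\<forall>c d. \<forall>f\<in>Hom C X Y. smul C (c + d) f = add C (smul C c f) (smul C d f)) \<and>
        (\<forall>c d. \<forall>f\<in>Hom C X Y. smul C c (smul C d f) = smul C (c * d) f) \<and>
        (\<forall>f\<in>Hom C X Y. smul C 1 f = f)"
    using lin unfolding is_klinear_def by (rule conjunct1)
  from bspec[OF bspec[OF this X] Y] show ?thesis .
qed
lemma linH: "f0 \<in> Hom C X Y \<Longrightarrow>
        zer C X Y \<in> Hom C X Y \<and>
        (\<forall>f\<in>Hom C X Y. \<forall>g\<in>Hom C X Y. add C f g \<in> Hom C X Y) \<and>
        (\<forall>c. \<forall>f\<in>Hom C X Y. smul C c f \<in> Hom C X Y) \<and>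
        (\<forall>f\<in>Hom C X Y. \<forall>g\<in>Hom C X Y. \<forall>h\<in>Hom C X Y.
            add C (add C f g) h = add C f (add C g h)) \<and>
        (\<forall>f\<in>Hom C X Y. \<forall>g\<in>Hom C X Y. add C f g = add C g f) \<and>
        (\<forall>f\<in>Hom C X Y. add C f (zer C X Y) = f) \<and>
        (\<forall>f\<in>Hom C X Y. add C f (neg C f) = zer C X Y) \<and>
        (\<forall>c. \<forall>f\<in>Hom C X Y. \<forall>g\<in>Hom C X Y.
            smul C c (add C f g) = add C (smul C c f) (smul C c g)) \<and>
        (\<forall>c d. \<forall>f\<in>Hom C X Y. smul C (c + d) f = add C (smul C c f) (smul C d f)) \<and>
        (\<forall>c d. \<forall>f\<in>Hom C X Y. smul C c (smul C d f) = smul C (c * d) f) \<and>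
        (\<forall>f\<in>Hom C X Y. smul C 1 f = f)"
  proof -
  assume a: "f0 \<in> Hom C X Y"
  from hom_objs[OF a] have "X \<in> Obj C" "Y \<in> Obj C" by auto
  then show ?thesis by (rule linA)
qed

lemma comp_hom[intro]: "f \<in> Hom C X Y \<Longrightarrow> g \<in> Hom C Y Z \<Longrightarrow> cmp C g f \<in> Hom C X Z"
  using cat_all by blast
lemma id_hom[intro]: "X \<in> Obj C \<Longrightarrow> idm C X \<in> Hom C X X"
  using cat_all by blast
lemma id_l[simp]: "f \<in> Hom C X Y \<Longrightarrow> cmp C (idm C Y) f = f"
  using cat_all by blast
lemma id_r[simp]: "f \<in> Hom C X Y \<Longrightarrow> cmp C f (idm C X) = f"
  using cat_all by blast
lemma assoc: "f \<in> Hom C W X \<Longrightarrow> g \<in> Hom C X Y \<Longrightarrow> h \<in> Hom C Y Z \<Longrightarrow>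
        cmp C h (cmp C g f) = cmp C (cmp C h g) f"
  using cat_all by blast
lemma hom_uniq: "f \<in> Hom C X Y \<Longrightarrow> f \<in> Hom C X' Y' \<Longrightarrow> X = X' \<and> Y = Y'"
proof -
  assume "f \<in> Hom C X Y" "f \<in> Hom C X' Y'"
  then have "Hom C X Y \<inter> Hom C X' Y' \<noteq> {}" by blast
  then show ?thesis using cat_all[THEN conjunct2, THEN conjunct1] by blast
qed

lemma zer_hom[intro]: "X \<in> Obj C \<Longrightarrow> Y \<in> Obj C \<Longrightarrow> zer C X Y \<in> Hom C X Y"
  using linA by blast
lemma add_hom[intro]: "f \<in> Hom C X Y \<Longrightarrow> g \<in> Hom C X Y \<Longrightarrow> add C f g \<in> Hom C X Y"
  using linH[of f X Y] by auto
lemma smul_hom[intro]: "f \<in> Hom C X Y \<Longrightarrow> smul C c f \<in> Hom C X Y"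
  using linH[of f X Y] by auto
lemma neg_hom[intro]: "f \<in> Hom C X Y \<Longrightarrow> neg C f \<in> Hom C X Y"
  unfolding neg_def by (rule smul_hom)
lemma add_assoc: "f \<in> Hom C X Y \<Longrightarrow> g \<in> Hom C X Y \<Longrightarrow> h \<in> Hom C X Y \<Longrightarrow>
   add C (add C f g) h = add C f (add C g h)"
  using linH[of f X Y] by auto
lemma add_comm: "f \<in> Hom C X Y \<Longrightarrow> g \<in> Hom C X Y \<Longrightarrow> add C f g = add C g f"
  using linH[of f X Y] by auto
lemma add_zer[simp]: "f \<in> Hom C X Y \<Longrightarrow> add C f (zer C X Y) = f"
  using linH[of f X Y] by auto
lemma add_neg[simp]: "f \<in> Hom C X Y \<Longrightarrow> add C f (neg C f) = zer C X Y"
  using linH[of f X Y] by auto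
lemma smul_add: "f \<in> Hom C X Y \<Longrightarrow> g \<in> Hom C X Y \<Longrightarrow> smul C c (add C f g) = add C (smul C c f) (smul C c g)"
  using linH[of f X Y] by auto
lemma smul_smul: "f \<in> Hom C X Y \<Longrightarrow> smul C c (smul C d f) = smul C (c * d) f"
  using linH[of f X Y] by auto
lemma smul_one[simp]: "f \<in> Hom C X Y \<Longrightarrow> smul C 1 f = f"
  using linH[of f X Y] by auto
lemma lin2: "(\<forall>X Y Z f f' g. f \<in> Hom C X Y \<longrightarrow> f' \<in> Hom C X Y \<longrightarrow> g \<in> Hom C Y Z \<longrightarrow>
        cmp C g (add C f f') = add C (cmp C g f) (cmp C g f')) \<and>
     (\<forall>X Y Z f g g'. f \<in> Hom C X Y \<longrightarrow> g \<in> Hom C Y Z \<longrightarrow> g' \<in> Hom C Y Z \<longrightarrow>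
        cmp C (add C g g') f = add C (cmp C g f) (cmp C g' f)) \<and>
     (\<forall>X Y Z f g c. f \<in> Hom C X Y \<longrightarrow> g \<in> Hom C Y Z \<longrightarrow>
        cmp C g (smul C c f) = smul C c (cmp C g f) \<and>
        cmp C (smul C c g) f = smul C c (cmp C g f))"
  using lin unfolding is_klinear_def by (rule conjunct2)

lemma cmp_add_r: "f \<in> Hom C X Y \<Longrightarrow> f' \<in> Hom C X Y \<Longrightarrow> g \<in> Hom C Y Z \<Longrightarrow>
        cmp C g (add C f f') = add C (cmp C g f) (cmp C g f')"
  using lin2[THEN conjunct1] by blast
lemma cmp_add_l: "f \<in> Hom C X Y \<Longrightarrow> g \<in> Hom C Y Z \<Longrightarrow> g' \<in> Hom C Y Z \<Longrightarrow>
        cmp C (add C g g') f = add C (cmp C g f) (cmp C g' f)"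
  using lin2[THEN conjunct2, THEN conjunct1] by blast
lemma cmp_smul_r: "f \<in> Hom C X Y \<Longrightarrow> g \<in> Hom C Y Z \<Longrightarrow> cmp C g (smul C c f) = smul C c (cmp C g f)"
  using lin2[THEN conjunct2, THEN conjunct2] by blast
lemma cmp_smul_l: "f \<in> Hom C X Y \<Longrightarrow> g \<in> Hom C Y Z \<Longrightarrow> cmp C (smul C c g) f = smul C c (cmp C g f)"
  using lin2[THEN conjunct2, THEN conjunct2] by blast

lemma idem_zero: assumes "x \<in> Hom C X Y" "add C x x = x" shows "x = zer C X Y"
proof -
  have "add C (add C x x) (neg C x) = add C x (add C x (neg C x))"
    using assms by (blast intro: add_assoc)
  then show ?thesis using assms by simp
qed

lemma cmp_zer_r[simp]: assumes "g \<in> Hom C Y Z" "X \<in> Obj C" shows "cmp C g (zer C X Y) = zer C X Z"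
proof -
  have Y: "Y \<in> Obj C" using assms hom_objs by blast
  have "cmp C g (zer C X Y) = cmp C g (add C (zer C X Y) (zer C X Y))" using Y assms by (simp add: zer_hom)
  also have "\<dots> = add C (cmp C g (zer C X Y)) (cmp C g (zer C X Y))" using Y assms by (blast intro: cmp_add_r)
  finally show ?thesis using Y assms by (metis idem_zero comp_hom zer_hom)
qed

lemma cmp_zer_l[simp]: assumes "f \<in> Hom C X Y" "Z \<in> Obj C" shows "cmp C (zer C Y Z) f = zer C X Z"
proof -
  have Y: "Y \<in> Obj C" using assms hom_objs by blast
  have "cmp C (zer C Y Z) f = cmp C (add C (zer C Y Z) (zer C Y Z)) f" using Y assms by (simp add: zer_hom)
  also have "\<dots> = add C (cmp C (zer C Y Z) f) (cmp C (zer C Y Z) f)" using Y assms by (blast intro: cmp_add_l)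
  finally show ?thesis using Y assms by (metis idem_zero comp_hom zer_hom)
qed

lemma zer_add[simp]: "f \<in> Hom C X Y \<Longrightarrow> add C (zer C X Y) f = f"
  by (metis add_comm add_zer hom_objs zer_hom)

lemma neg_add: "f \<in> Hom C X Y \<Longrightarrow> g \<in> Hom C X Y \<Longrightarrow> neg C (add C f g) = add C (neg C f) (neg C g)"
  unfolding neg_def by (rule smul_add)
lemma neg_neg[simp]: "f \<in> Hom C X Y \<Longrightarrow> neg C (neg C f) = f"
  unfolding neg_def by (simp add: smul_smul)
lemma cmp_neg_r: "f \<in> Hom C X Y \<Longrightarrow> g \<in> Hom C Y Z \<Longrightarrow> cmp C g (neg C f) = neg C (cmp C g f)"
  unfolding neg_def by (rule cmp_smul_r)
lemma cmp_neg_l: "f \<in> Hom C X Y \<Longrightarrow> g \<in> Hom C Y Z \<Longrightarrow> cmp C (neg C g) f = neg C (cmp C g f)"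
  unfolding neg_def by (rule cmp_smul_l)
lemma neg_add'[simp]: "f \<in> Hom C X Y \<Longrightarrow> add C (neg C f) f = zer C X Y"
  by (metis add_comm add_neg neg_hom)
lemma neg_zer[simp]: assumes "X \<in> Obj C" "Y \<in> Obj C" shows "neg C (zer C X Y) = zer C X Y"
proof -
  have z: "zer C X Y \<in> Hom C X Y" using assms by (rule zer_hom)
  have "add C (zer C X Y) (neg C (zer C X Y)) = neg C (zer C X Y)" using z by (intro zer_add neg_hom)
  moreover have "add C (zer C X Y) (neg C (zer C X Y)) = zer C X Y" using z by (rule add_neg)
  ultimately show ?thesis by simp
qed

end


context kc begin

definition mor where "mor f \<longleftrightarrow> (\<exists>X Y. f \<in> Hom C X Y)"
definition sr where "sr f = (THE X. \<exists>Y. f \<in> Hom C X Y)"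
definition tg where "tg f = (THE Y. \<exists>X. f \<in> Hom C X Y)"

lemma homD: assumes "f \<in> Hom C X Y" shows "mor f" "sr f = X" "tg f = Y"
proof -
  show "mor f" unfolding mor_def by (intro exI) (rule assms)
  show "sr f = X" unfolding sr_def
  proof (rule the_equality)
    show "\<exists>Y. f \<in> Hom C X Y" using assms by blast
    fix X' assume "\<exists>Y. f \<in> Hom C X' Y"
    then obtain Y' where "f \<in> Hom C X' Y'" by blast
    then show "X' = X" using hom_uniq[OF assms] by blast
  qed
  show "tg f = Y" unfolding tg_def
  proof (rule the_equality)
    show "\<exists>X'. f \<in> Hom C X' Y" using assms by blast
    fix Y' assume "\<exists>X'. f \<in> Hom C X' Y'"
    then obtain X' where "f \<in> Hom C X' Y'" by blast
    then show "Y' = Y" using hom_uniq[OF assms] by blast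
  qed
qed

lemma morD: "mor f \<Longrightarrow> f \<in> Hom C (sr f) (tg f)"
  unfolding mor_def using homD by blast

lemma hom_iff: "f \<in> Hom C X Y \<longleftrightarrow> mor f \<and> sr f = X \<and> tg f = Y"
  using homD morD by blast

lemma mor_objs[simp]: "mor f \<Longrightarrow> sr f \<in> Obj C" "mor f \<Longrightarrow> tg f \<in> Obj C"
  using morD hom_objs by blast+

lemma cmp_simps[simp]:
  assumes "mor f" "mor g" "tg f = sr g"
  shows "mor (cmp C g f)" "sr (cmp C g f) = sr f" "tg (cmp C g f) = tg g"
proof -
  have "f \<in> Hom C (sr f) (tg f)" using morD assms(1) by blast
  moreover have "g \<in> Hom C (tg f) (tg g)" using morD[OF assms(2)] assms(3) by simp
  ultimately have "cmp C g f \<in> Hom C (sr f) (tg g)" by (rule comp_hom)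
  then show "mor (cmp C g f)" "sr (cmp C g f) = sr f" "tg (cmp C g f) = tg g" using homD by auto
qed

lemma idm_simps[simp]: assumes "X \<in> Obj C" shows "mor (idm C X)" "sr (idm C X) = X" "tg (idm C X) = X"
  using homD[OF id_hom[OF assms]] by auto

lemma zer_simps[simp]: assumes "X \<in> Obj C" "Y \<in> Obj C" shows "mor (zer C X Y)" "sr (zer C X Y) = X" "tg (zer C X Y) = Y"
  using homD[OF zer_hom[OF assms]] by auto

lemma add_simps[simp]:
  assumes "mor f" "mor g" "sr g = sr f" "tg g = tg f"
  shows "mor (add C f g)" "sr (add C f g) = sr f" "tg (add C f g) = tg f"
proof -
  have "f \<in> Hom C (sr f) (tg f)" using morD assms(1) by blast
  moreover have "g \<in> Hom C (sr f) (tg f)" using morD[OF assms(2)] assms(3,4) by simp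
  ultimately have "add C f g \<in> Hom C (sr f) (tg f)" by (rule add_hom)
  then show "mor (add C f g)" "sr (add C f g) = sr f" "tg (add C f g) = tg f" using homD by auto
qed

lemma smul_simps[simp]:
  assumes "mor f"
  shows "mor (smul C c f)" "sr (smul C c f) = sr f" "tg (smul C c f) = tg f"
  using homD[OF smul_hom[OF morD[OF assms(1)]]] by auto

lemma neg_simps[simp]:
  assumes "mor f"
  shows "mor (neg C f)" "sr (neg C f) = sr f" "tg (neg C f) = tg f"
  using homD[OF neg_hom[OF morD[OF assms(1)]]] by auto

lemma assoc_r[simp]: "mor f \<Longrightarrow> mor g \<Longrightarrow> mor h \<Longrightarrow> tg f = sr g \<Longrightarrow> tg g = sr h \<Longrightarrow>
   cmp C (cmp C h g) f = cmp C h (cmp C g f)"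
proof -
  assume a: "mor f" "mor g" "mor h" "tg f = sr g" "tg g = sr h"
  have 1: "f \<in> Hom C (sr f) (tg f)" by (rule morD) fact
  have 2: "g \<in> Hom C (tg f) (tg g)" using morD[of g] a by simp
  have 3: "h \<in> Hom C (tg g) (tg h)" using morD[of h] a by simp
  from assoc[OF 1 2 3] show ?thesis by simp
qed

lemma idl[simp]: "mor f \<Longrightarrow> tg f = Y \<Longrightarrow> cmp C (idm C Y) f = f"
  using id_l morD by blast
lemma idr[simp]: "mor f \<Longrightarrow> sr f = X \<Longrightarrow> cmp C f (idm C X) = f"
  using id_r morD by blast

lemma add_assoc_m[simp]: "mor f \<Longrightarrow> mor g \<Longrightarrow> mor h \<Longrightarrow> sr g = sr f \<Longrightarrow> tg g = tg f \<Longrightarrow>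
   sr h = sr f \<Longrightarrow> tg h = tg f \<Longrightarrow> add C (add C f g) h = add C f (add C g h)"
  using add_assoc morD by (metis)
lemma add_comm_m: "mor f \<Longrightarrow> mor g \<Longrightarrow> sr g = sr f \<Longrightarrow> tg g = tg f \<Longrightarrow> add C f g = add C g f"
  using add_comm morD by (metis)
lemma add_lcomm_m: "mor f \<Longrightarrow> mor g \<Longrightarrow> mor h \<Longrightarrow> sr g = sr f \<Longrightarrow> tg g = tg f \<Longrightarrow>
   sr h = sr f \<Longrightarrow> tg h = tg f \<Longrightarrow> add C f (add C g h) = add C g (add C f h)"
  by (metis add_assoc_m add_comm_m)
lemmas add_ac = add_comm_m add_lcomm_m

lemma addz[simp]: "mor f \<Longrightarrow> sr f = X \<Longrightarrow> tg f = Y \<Longrightarrow> add C f (zer C X Y) = f"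
  using add_zer morD by blast
lemma zadd[simp]: "mor f \<Longrightarrow> sr f = X \<Longrightarrow> tg f = Y \<Longrightarrow> add C (zer C X Y) f = f"
  using zer_add morD by blast
lemma addneg[simp]: "mor f \<Longrightarrow> add C f (neg C f) = zer C (sr f) (tg f)"
  using add_neg morD by blast
lemma negadd[simp]: "mor f \<Longrightarrow> add C (neg C f) f = zer C (sr f) (tg f)"
  using neg_add' morD by blast
lemma addneg2[simp]: "mor f \<Longrightarrow> mor g \<Longrightarrow> sr g = sr f \<Longrightarrow> tg g = tg f \<Longrightarrow> add C f (add C (neg C f) g) = g"
  by (metis add_assoc_m addneg zadd neg_simps)
lemma negadd2[simp]: "mor f \<Longrightarrow> mor g \<Longrightarrow> sr g = sr f \<Longrightarrow> tg g = tg f \<Longrightarrow> add C (neg C f) (add C f g) = g"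
  by (metis add_assoc_m negadd zadd neg_simps)
lemma negneg[simp]: "mor f \<Longrightarrow> neg C (neg C f) = f"
  using neg_neg morD by blast
lemma neg_add_m[simp]: "mor f \<Longrightarrow> mor g \<Longrightarrow> sr g = sr f \<Longrightarrow> tg g = tg f \<Longrightarrow>
   neg C (add C f g) = add C (neg C f) (neg C g)"
  using neg_add morD by metis
lemma negz[simp]: "X \<in> Obj C \<Longrightarrow> Y \<in> Obj C \<Longrightarrow> neg C (zer C X Y) = zer C X Y"
  by (rule neg_zer)

lemma cmp_add_r_m[simp]: "mor f \<Longrightarrow> mor f' \<Longrightarrow> mor g \<Longrightarrow> sr f' = sr f \<Longrightarrow> tg f' = tg f \<Longrightarrow> tg f = sr g \<Longrightarrow>
   cmp C g (add C f f') = add C (cmp C g f) (cmp C g f')"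
  using cmp_add_r morD by metis
lemma cmp_add_l_m[simp]: "mor f \<Longrightarrow> mor g \<Longrightarrow> mor g' \<Longrightarrow> sr g' = sr g \<Longrightarrow> tg g' = tg g \<Longrightarrow> tg f = sr g \<Longrightarrow>
   cmp C (add C g g') f = add C (cmp C g f) (cmp C g' f)"
  using cmp_add_l morD by metis
lemma cmp_neg_r_m[simp]: "mor f \<Longrightarrow> mor g \<Longrightarrow> tg f = sr g \<Longrightarrow> cmp C g (neg C f) = neg C (cmp C g f)"
  using cmp_neg_r morD by metis
lemma cmp_neg_l_m[simp]: "mor f \<Longrightarrow> mor g \<Longrightarrow> tg f = sr g \<Longrightarrow> cmp C (neg C g) f = neg C (cmp C g f)"
  using cmp_neg_l morD by metis
lemma cmp_smul_r_m[simp]: "mor f \<Longrightarrow> mor g \<Longrightarrow> tg f = sr g \<Longrightarrow> cmp C g (smul C c f) = smul C c (cmp C g f)"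
  using cmp_smul_r morD by metis
lemma cmp_smul_l_m[simp]: "mor f \<Longrightarrow> mor g \<Longrightarrow> tg f = sr g \<Longrightarrow> cmp C (smul C c g) f = smul C c (cmp C g f)"
  using cmp_smul_l morD by metis
lemma cmpz_r[simp]: "mor g \<Longrightarrow> X \<in> Obj C \<Longrightarrow> Y = sr g \<Longrightarrow> cmp C g (zer C X Y) = zer C X (tg g)"
  using cmp_zer_r morD by blast
lemma cmpz_l[simp]: "mor f \<Longrightarrow> Z \<in> Obj C \<Longrightarrow> Y = tg f \<Longrightarrow> cmp C (zer C Y Z) f = zer C (sr f) Z"
  using cmp_zer_l morD by blast

lemma test: "mor a \<Longrightarrow> mor b \<Longrightarrow> mor c \<Longrightarrow> mor d \<Longrightarrow> tg a = sr b \<Longrightarrow> tg b = sr c \<Longrightarrow> tg c = sr d \<Longrightarrow>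
  cmp C (cmp C (cmp C d c) b) a = cmp C d (cmp C c (cmp C b a))"
  by simp

end


context kc begin

lemma isoD: "is_iso C X Y f \<Longrightarrow> \<exists>g. mor g \<and> sr g = Y \<and> tg g = X \<and> cmp C g f = idm C X \<and> cmp C f g = idm C Y"
  unfolding is_iso_def Bex_def hom_iff by blast
lemma isoI: "mor f \<Longrightarrow> sr f = X \<Longrightarrow> tg f = Y \<Longrightarrow> mor g \<Longrightarrow> sr g = Y \<Longrightarrow> tg g = X \<Longrightarrow>
   cmp C g f = idm C X \<Longrightarrow> cmp C f g = idm C Y \<Longrightarrow> is_iso C X Y f"
  unfolding is_iso_def Bex_def hom_iff by blast

lemma solve_add: assumes "add C x y = z" "mor x" "mor y" "sr y = sr x" "tg y = tg x"
  shows "y = add C z (neg C x)"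
proof -
  have "y = add C (neg C x) (add C x y)" using assms(2-5) by simp
  also have "\<dots> = add C (neg C x) z" using assms by simp
  also have "\<dots> = add C z (neg C x)" using assms add_comm_m[of "neg C x" z] by (metis add_simps neg_simps)
  finally show ?thesis .
qed

lemma ab_ba:
  assumes a: "mor a" "sr a = W" "tg a = X" and b: "mor b" "sr b = X" "tg b = W"
    and iso: "is_iso C X X (add C (idm C X) (neg C (cmp C a b)))"
  shows "is_iso C W W (add C (idm C W) (neg C (cmp C b a)))"
proof -
  have ob: "W \<in> Obj C" "X \<in> Obj C" using mor_objs a by auto
  obtain c where c: "mor c" "sr c = X" "tg c = X"
    and e1: "cmp C c (add C (idm C X) (neg C (cmp C a b))) = idm C X"
    and e2: "cmp C (add C (idm C X) (neg C (cmp C a b))) c = idm C X"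
    using isoD[OF iso] by (auto simp: a b ob)
  have e1': "add C c (neg C (cmp C c (cmp C a b))) = idm C X" using e1 a b c ob by simp
  have e2': "add C c (neg C (cmp C a (cmp C b c))) = idm C X" using e2 a b c ob by simp
  have K1: "add C (cmp C b (cmp C c a)) (neg C (cmp C b (cmp C a (cmp C b (cmp C c a))))) = cmp C b a"
  proof -
    have "cmp C b (cmp C (add C c (neg C (cmp C a (cmp C b c)))) a) = cmp C b (cmp C (idm C X) a)"
      by (simp only: e2')
    then show ?thesis using a b c ob by simp
  qed
  have K2: "add C (cmp C b (cmp C c a)) (neg C (cmp C b (cmp C c (cmp C a (cmp C b a))))) = cmp C b a"
  proof -
    have "cmp C b (cmp C (add C c (neg C (cmp C c (cmp C a b)))) a) = cmp C b (cmp C (idm C X) a)"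
      by (simp only: e1')
    then show ?thesis using a b c ob by simp
  qed
  show ?thesis
  proof (rule isoI[where g = "add C (idm C W) (cmp C b (cmp C c a))"])
    show "cmp C (add C (idm C W) (cmp C b (cmp C c a))) (add C (idm C W) (neg C (cmp C b a))) = idm C W"
      using a b c ob solve_add[OF K2] by simp
    show "cmp C (add C (idm C W) (neg C (cmp C b a))) (add C (idm C W) (cmp C b (cmp C c a))) = idm C W"
      using a b c ob solve_add[OF K1] by (simp add: add_ac)
  qed (use a b c ob in simp_all)
qed


lemma cancel: assumes "cmp C p i = idm C (sr i)" "mor p" "mor i" "tg i = sr p" "mor x" "tg x = sr i"
  shows "cmp C p (cmp C i x) = x"
proof -
  have "cmp C p (cmp C i x) = cmp C (cmp C p i) x" by (rule assoc_r[symmetric]) (use assms in auto)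
  also have "\<dots> = cmp C (idm C (sr i)) x" by (simp only: assms(1))
  also have "\<dots> = x" using assms by simp
  finally show ?thesis .
qed

lemma iso_comp: assumes "is_iso C X Y f" "is_iso C Y Z g" shows "is_iso C X Z (cmp C g f)"
proof -
  obtain f' where f: "mor f" "sr f = X" "tg f = Y" and f': "mor f'" "sr f' = Y" "tg f' = X" "cmp C f' f = idm C X" "cmp C f f' = idm C Y"
    using assms(1) isoD unfolding is_iso_def hom_iff by blast
  obtain g' where g: "mor g" "sr g = Y" "tg g = Z" and g': "mor g'" "sr g' = Z" "tg g' = Y" "cmp C g' g = idm C Y" "cmp C g g' = idm C Z"
    using assms(2) isoD unfolding is_iso_def hom_iff by blast
  have ob: "X \<in> Obj C" "Y \<in> Obj C" "Z \<in> Obj C" using f g mor_objs by auto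
  have c1: "cmp C g' (cmp C g x) = x" if "mor x" "tg x = Y" for x
    using cancel[of g' g x] g g' that by simp
  have c2: "cmp C f (cmp C f' x) = x" if "mor x" "tg x = Y" for x
    using cancel[of f f' x] f f' that by simp
  show ?thesis
    apply (rule isoI[where g = "cmp C f' g'"])
    using f f' g g' ob c1[of f] c2[of g'] by simp_all
qed

lemma iso_id: "X \<in> Obj C \<Longrightarrow> is_iso C X X (idm C X)"
  by (rule isoI[where g = "idm C X"]) simp_all

lemma jrad_iff: "f \<in> jrad C X Y \<longleftrightarrow> mor f \<and> sr f = X \<and> tg f = Y \<and>
   (\<forall>g. mor g \<and> sr g = Y \<and> tg g = X \<longrightarrow> is_iso C X X (add C (idm C X) (neg C (cmp C g f))))"
  unfolding jrad_def Ball_def hom_iff mem_Collect_eq by blast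

lemma J_comp_l: assumes "f \<in> jrad C X Y" "mor g" "sr g = Y" shows "cmp C g f \<in> jrad C X (tg g)"
proof -
  have f: "mor f" "sr f = X" "tg f = Y" and J: "\<And>k. mor k \<Longrightarrow> sr k = Y \<Longrightarrow> tg k = X \<Longrightarrow> is_iso C X X (add C (idm C X) (neg C (cmp C k f)))"
    using assms(1) unfolding jrad_iff by auto
  show ?thesis unfolding jrad_iff
  proof (intro conjI allI impI)
    fix k assume k: "mor k \<and> sr k = tg g \<and> tg k = X"
    show "is_iso C X X (add C (idm C X) (neg C (cmp C k (cmp C g f))))"
      using J[of "cmp C k g"] k f assms by simp
  qed (use f assms in auto)
qed

lemma J_comp_r: assumes "f \<in> jrad C X Y" "mor h" "tg h = X" shows "cmp C f h \<in> jrad C (sr h) Y"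
proof -
  have f: "mor f" "sr f = X" "tg f = Y" and J: "\<And>k. mor k \<Longrightarrow> sr k = Y \<Longrightarrow> tg k = X \<Longrightarrow> is_iso C X X (add C (idm C X) (neg C (cmp C k f)))"
    using assms(1) unfolding jrad_iff by auto
  show ?thesis unfolding jrad_iff
  proof (intro conjI allI impI)
    fix g assume g: "mor g \<and> sr g = Y \<and> tg g = sr h"
    have "is_iso C X X (add C (idm C X) (neg C (cmp C h (cmp C g f))))"
      using J[of "cmp C h g"] g f assms by simp
    from ab_ba[of h "sr h" X "cmp C g f", OF _ _ _ _ _ _ this]
    show "is_iso C (sr h) (sr h) (add C (idm C (sr h)) (neg C (cmp C g (cmp C f h))))"
      using g f assms by simp
  qed (use f assms in auto)
qed

lemma J_neg: assumes "f \<in> jrad C X Y" shows "neg C f \<in> jrad C X Y"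
proof -
  have f: "mor f" "sr f = X" "tg f = Y" and J: "\<And>k. mor k \<Longrightarrow> sr k = Y \<Longrightarrow> tg k = X \<Longrightarrow> is_iso C X X (add C (idm C X) (neg C (cmp C k f)))"
    using assms(1) unfolding jrad_iff by auto
  show ?thesis unfolding jrad_iff
  proof (intro conjI allI impI)
    fix g assume g: "mor g \<and> sr g = Y \<and> tg g = X"
    show "is_iso C X X (add C (idm C X) (neg C (cmp C g (neg C f))))"
      using J[of "neg C g"] g f by simp
  qed (use f in auto)
qed

lemma J_zer: assumes "X \<in> Obj C" "Y \<in> Obj C" shows "zer C X Y \<in> jrad C X Y"
  unfolding jrad_iff using assms iso_id[OF assms(1)] by simp

lemma J_add: assumes "f1 \<in> jrad C X Y" "f2 \<in> jrad C X Y" shows "add C f1 f2 \<in> jrad C X Y"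
proof -
  have f1: "mor f1" "sr f1 = X" "tg f1 = Y" and J1: "\<And>k. mor k \<Longrightarrow> sr k = Y \<Longrightarrow> tg k = X \<Longrightarrow> is_iso C X X (add C (idm C X) (neg C (cmp C k f1)))"
    using assms(1) unfolding jrad_iff by auto
  have f2: "mor f2" "sr f2 = X" "tg f2 = Y" and J2: "\<And>k. mor k \<Longrightarrow> sr k = Y \<Longrightarrow> tg k = X \<Longrightarrow> is_iso C X X (add C (idm C X) (neg C (cmp C k f2)))"
    using assms(2) unfolding jrad_iff by auto
  have ob: "X \<in> Obj C" "Y \<in> Obj C" using f1 mor_objs by auto
  show ?thesis unfolding jrad_iff
  proof (intro conjI allI impI)
    fix g assume g: "mor g \<and> sr g = Y \<and> tg g = X"
    define u where "u = add C (idm C X) (neg C (cmp C g f1))"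
    have u: "mor u" "sr u = X" "tg u = X" unfolding u_def using g f1 ob by auto
    have iu: "is_iso C X X u" unfolding u_def using J1 g by auto
    then obtain v where v: "mor v" "sr v = X" "tg v = X" "cmp C u v = idm C X" using isoD by blast
    have iw: "is_iso C X X (add C (idm C X) (neg C (cmp C (cmp C v g) f2)))" using J2 g v by auto
    have uv: "cmp C u (cmp C v x) = x" if "mor x" "tg x = X" for x
      using cancel[of u v x] u v that by simp
    have eq: "cmp C u (add C (idm C X) (neg C (cmp C (cmp C v g) f2))) = add C (idm C X) (neg C (cmp C g (add C f1 f2)))"
    proof -
      have "cmp C u (add C (idm C X) (neg C (cmp C (cmp C v g) f2))) = add C u (neg C (cmp C u (cmp C v (cmp C g f2))))"
        using u v g f2 ob by simp
      also have "\<dots> = add C u (neg C (cmp C g f2))" using uv[of "cmp C g f2"] g f2 by simp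
      finally show ?thesis unfolding u_def using g f1 f2 ob by simp
    qed
    show "is_iso C X X (add C (idm C X) (neg C (cmp C g (add C f1 f2))))"
      using iso_comp[OF iw iu] eq by simp
  qed (use f1 f2 in auto)
qed

lemma J_ideal: "is_ideal C (jrad C)"
  unfolding is_ideal_def
proof (intro conjI allI ballI impI)
  fix X Y show "jrad C X Y \<subseteq> Hom C X Y" unfolding jrad_def by blast
next
  fix X Y assume "X \<in> Obj C" "Y \<in> Obj C" then show "zer C X Y \<in> jrad C X Y" by (rule J_zer)
next
  fix X Y f g assume "f \<in> jrad C X Y" "g \<in> jrad C X Y" then show "add C f g \<in> jrad C X Y" by (rule J_add)
next
  fix X Y f assume "f \<in> jrad C X Y" then show "neg C f \<in> jrad C X Y" by (rule J_neg)
next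
  fix W X Y Z h f g assume a: "h \<in> Hom C W X" "f \<in> jrad C X Y" "g \<in> Hom C Y Z"
  have "cmp C f h \<in> jrad C W Y" using J_comp_r[OF a(2), of h] a(1) unfolding hom_iff by auto
  from J_comp_l[OF this, of g] a(3) show "cmp C g (cmp C f h) \<in> jrad C W Z" unfolding hom_iff by auto
qed

end


context kc begin

lemma idealD:
  assumes "is_ideal C I"
  shows "f \<in> I X Y \<Longrightarrow> mor f \<and> sr f = X \<and> tg f = Y"
    and "X \<in> Obj C \<Longrightarrow> Y \<in> Obj C \<Longrightarrow> zer C X Y \<in> I X Y"
    and "f \<in> I X Y \<Longrightarrow> g \<in> I X Y \<Longrightarrow> add C f g \<in> I X Y"
    and "f \<in> I X Y \<Longrightarrow> mor g \<Longrightarrow> sr g = Y \<Longrightarrow> cmp C g f \<in> I X (tg g)"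
    and "f \<in> I X Y \<Longrightarrow> mor h \<Longrightarrow> tg h = X \<Longrightarrow> cmp C f h \<in> I (sr h) Y"
proof -
  have sub: "\<And>X Y. I X Y \<subseteq> Hom C X Y" using assms unfolding is_ideal_def by blast
  have cl: "\<And>W X Y Z h f g. h \<in> Hom C W X \<Longrightarrow> f \<in> I X Y \<Longrightarrow> g \<in> Hom C Y Z \<Longrightarrow> cmp C g (cmp C f h) \<in> I W Z"
    using assms unfolding is_ideal_def by blast
  show 1: "f \<in> I X Y \<Longrightarrow> mor f \<and> sr f = X \<and> tg f = Y" for f X Y using sub hom_iff by blast
  show "X \<in> Obj C \<Longrightarrow> Y \<in> Obj C \<Longrightarrow> zer C X Y \<in> I X Y" using assms unfolding is_ideal_def by blast
  show "f \<in> I X Y \<Longrightarrow> g \<in> I X Y \<Longrightarrow> add C f g \<in> I X Y"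
  proof -
    assume a: "f \<in> I X Y" "g \<in> I X Y"
    then have "X \<in> Obj C" "Y \<in> Obj C" using 1 mor_objs by blast+
    then show ?thesis using a assms unfolding is_ideal_def by blast
  qed
  show "f \<in> I X Y \<Longrightarrow> mor g \<Longrightarrow> sr g = Y \<Longrightarrow> cmp C g f \<in> I X (tg g)"
  proof -
    assume a: "f \<in> I X Y" "mor g" "sr g = Y"
    have "cmp C g (cmp C f (idm C X)) \<in> I X (tg g)"
      by (rule cl) (use a 1[OF a(1)] hom_iff in auto)
    then show ?thesis using a 1[OF a(1)] by simp
  qed
  show "f \<in> I X Y \<Longrightarrow> mor h \<Longrightarrow> tg h = X \<Longrightarrow> cmp C f h \<in> I (sr h) Y"
  proof -
    assume a: "f \<in> I X Y" "mor h" "tg h = X"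
    have "cmp C (idm C Y) (cmp C f h) \<in> I (sr h) Y"
      by (rule cl) (use a 1[OF a(1)] hom_iff in auto)
    then show ?thesis using a 1[OF a(1)] by simp
  qed
qed

lemma dsum2:
  assumes "is_dsum C S [A, B] ins prs"
  obtains i1 i2 p1 p2 where "ins = [i1, i2]" "prs = [p1, p2]"
    "mor i1" "sr i1 = A" "tg i1 = S" "mor i2" "sr i2 = B" "tg i2 = S"
    "mor p1" "sr p1 = S" "tg p1 = A" "mor p2" "sr p2 = S" "tg p2 = B"
    "cmp C p1 i1 = idm C A" "cmp C p2 i2 = idm C B" "cmp C p1 i2 = zer C B A" "cmp C p2 i1 = zer C A B"
    "add C (cmp C i1 p1) (cmp C i2 p2) = idm C S"
proof -
  have L: "length ins = 2" "length prs = 2" and H: "\<forall>k<2. [A, B] ! k \<in> Obj C \<and> ins ! k \<in> Hom C ([A, B] ! k) S \<and> prs ! k \<in> Hom C S ([A, B] ! k)"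
    and R: "\<forall>k<2. \<forall>l<2. cmp C (prs ! k) (ins ! l) = (if k = l then idm C ([A, B] ! k) else zer C ([A, B] ! l) ([A, B] ! k))"
    and M: "msum C S S (map (\<lambda>k. cmp C (ins ! k) (prs ! k)) [0..<2]) = idm C S"
    and S: "S \<in> Obj C"
    using assms unfolding is_dsum_def by (simp_all only: list.size numeral_2_eq_2 add_0 Suc_eq_plus1) blast+
  obtain i1 i2 where ins: "ins = [i1, i2]" using L(1)
    by (metis (no_types) length_0_conv length_Suc_conv numeral_2_eq_2)
  obtain p1 p2 where prs: "prs = [p1, p2]" using L(2)
    by (metis (no_types) length_0_conv length_Suc_conv numeral_2_eq_2)
  have h1: "i1 \<in> Hom C A S" "p1 \<in> Hom C S A" using H[rule_format, of 0] ins prs by auto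
  have h2: "i2 \<in> Hom C B S" "p2 \<in> Hom C S B" using H[rule_format, of 1] ins prs by auto
  have r: "cmp C p1 i1 = idm C A" "cmp C p2 i2 = idm C B" "cmp C p1 i2 = zer C B A" "cmp C p2 i1 = zer C A B"
    using R[rule_format, of 0 0] R[rule_format, of 1 1] R[rule_format, of 0 1] R[rule_format, of 1 0] ins prs by auto
  have "[0..<2] = [0::nat, 1]" by (simp add: upt_rec)
  then have "add C (cmp C i1 p1) (add C (cmp C i2 p2) (zer C S S)) = idm C S" using M ins prs by simp
  then have m: "add C (cmp C i1 p1) (cmp C i2 p2) = idm C S" using h1 h2 S hom_iff by auto
  show ?thesis by (rule that[OF ins prs _ _ _ _ _ _ _ _ _ _ _ _ r m]) (use h1 h2 hom_iff in auto)
qed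

lemma iprod_single:
  assumes A: "is_ideal C A" and B: "is_ideal C B" and add: "is_additive C"
    and f: "f \<in> iprod C A B X Y" and X: "X \<in> Obj C" and Y: "Y \<in> Obj C"
  shows "\<exists>Z b a. Z \<in> Obj C \<and> b \<in> B X Z \<and> a \<in> A Z Y \<and> f = cmp C a b"
  using f
proof induction
  case iprod_zero
  show ?case
    apply (rule exI[of _ X], rule exI[of _ "zer C X X"], rule exI[of _ "zer C X Y"])
    using idealD(2)[OF A] idealD(2)[OF B] X Y by simp
next
  case (iprod_step s W b a)
  obtain Z b' a' where Z: "Z \<in> Obj C" and b': "b' \<in> B X Z" and a': "a' \<in> A Z Y" and s: "s = cmp C a' b'"
    using iprod_step.IH by blast
  obtain S ins prs where "is_dsum C S [W, Z] ins prs" using add Z iprod_step.hyps(2) unfolding is_additive_def by blast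
  then obtain i1 i2 p1 p2 where d:
    "mor i1" "sr i1 = W" "tg i1 = S" "mor i2" "sr i2 = Z" "tg i2 = S"
    "mor p1" "sr p1 = S" "tg p1 = W" "mor p2" "sr p2 = S" "tg p2 = Z"
    and r: "cmp C p1 i1 = idm C W" "cmp C p2 i2 = idm C Z" "cmp C p1 i2 = zer C Z W" "cmp C p2 i1 = zer C W Z"
    by (rule dsum2)
  have bb: "mor b" "sr b = X" "tg b = W" using idealD(1)[OF B iprod_step.hyps(3)] by auto
  have aa: "mor a" "sr a = W" "tg a = Y" using idealD(1)[OF A iprod_step.hyps(4)] by auto
  have bb': "mor b'" "sr b' = X" "tg b' = Z" using idealD(1)[OF B b'] by auto
  have aa': "mor a'" "sr a' = Z" "tg a' = Y" using idealD(1)[OF A a'] by auto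
  have S: "S \<in> Obj C" using d mor_objs by auto
  have c1: "cmp C p1 (cmp C i1 x) = x" if "mor x" "tg x = W" for x using cancel[of p1 i1 x] d r that by simp
  have c2: "cmp C p2 (cmp C i2 x) = x" if "mor x" "tg x = Z" for x using cancel[of p2 i2 x] d r that by simp
  have c3: "cmp C p1 (cmp C i2 x) = zer C (sr x) W" if "mor x" "tg x = Z" for x
  proof -
    have "cmp C p1 (cmp C i2 x) = cmp C (cmp C p1 i2) x" using d that by simp
    then show ?thesis using r d that iprod_step.hyps(2) by simp
  qed
  have c4: "cmp C p2 (cmp C i1 x) = zer C (sr x) Z" if "mor x" "tg x = W" for x
  proof -
    have "cmp C p2 (cmp C i1 x) = cmp C (cmp C p2 i1) x" using d that by simp
    then show ?thesis using r d that Z by simp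
  qed
  let ?b = "add C (cmp C i1 b) (cmp C i2 b')"
  let ?a = "add C (cmp C a p1) (cmp C a' p2)"
  have m1: "cmp C i1 b \<in> B X S" using idealD(4)[OF B iprod_step.hyps(3), of i1] d by simp
  have m2: "cmp C i2 b' \<in> B X S" using idealD(4)[OF B b', of i2] d by simp
  have m3: "cmp C a p1 \<in> A S Y" using idealD(5)[OF A iprod_step.hyps(4), of p1] d by simp
  have m4: "cmp C a' p2 \<in> A S Y" using idealD(5)[OF A a', of p2] d by simp
  have inB: "?b \<in> B X S" by (rule idealD(3)[OF B m1 m2])
  have inA: "?a \<in> A S Y" by (rule idealD(3)[OF A m3 m4])
  have "cmp C ?a ?b = add C (cmp C a b) s"
    using d bb aa bb' aa' s c1[of b] c2[of b'] c3[of b'] c4[of b] X Y Z S iprod_step.hyps(2) by simp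
  then show ?case using inA inB S by metis
qed

end


context kc begin

lemma rad_id: assumes "idm C Y \<in> jrad C Y Y" "Y \<in> Obj C" shows "idm C Y = zer C Y Y"
proof -
  have "\<forall>g. mor g \<and> sr g = Y \<and> tg g = Y \<longrightarrow> is_iso C Y Y (add C (idm C Y) (neg C (cmp C g (idm C Y))))"
    using assms(1) unfolding jrad_iff by blast
  then have "is_iso C Y Y (add C (idm C Y) (neg C (cmp C (idm C Y) (idm C Y))))"
    using assms(2) idm_simps by blast
  then have "is_iso C Y Y (zer C Y Y)" using assms by simp
  then obtain g where g: "mor g" "sr g = Y" "tg g = Y" "cmp C g (zer C Y Y) = idm C Y" using isoD by blast
  then show ?thesis using assms by simp
qed

lemma local_endD: "local_end C Y \<Longrightarrow> mor u \<Longrightarrow> sr u = Y \<Longrightarrow> tg u = Y \<Longrightarrow>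
   is_iso C Y Y u \<or> is_iso C Y Y (add C (idm C Y) (neg C u))"
proof -
  assume L: "local_end C Y" and u: "mor u" "sr u = Y" "tg u = Y"
  have "\<forall>f\<in>Hom C Y Y. is_iso C Y Y f \<or> is_iso C Y Y (add C (idm C Y) (neg C f))"
    using L unfolding local_end_def by (elim conjE)
  moreover have "u \<in> Hom C Y Y" using u hom_iff by auto
  ultimately show ?thesis by (rule bspec)
qed

end




context kc begin

lemma msum_mor: assumes "\<And>f. f \<in> set fs \<Longrightarrow> mor f \<and> sr f = X \<and> tg f = Y" "X \<in> Obj C" "Y \<in> Obj C"
  shows "mor (msum C X Y fs) \<and> sr (msum C X Y fs) = X \<and> tg (msum C X Y fs) = Y"
  using assms(1) by (induction fs) (use assms(2,3) in auto)

lemma cmp_msum_l: assumes "\<And>f. f \<in> set fs \<Longrightarrow> mor f \<and> sr f = X \<and> tg f = Y" "X \<in> Obj C" "Y \<in> Obj C"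
    "mor g" "sr g = Y"
  shows "cmp C g (msum C X Y fs) = msum C X (tg g) (map (cmp C g) fs)"
  using assms(1)
proof (induction fs)
  case Nil then show ?case using assms by simp
next
  case (Cons f fs)
  have m: "mor (msum C X Y fs) \<and> sr (msum C X Y fs) = X \<and> tg (msum C X Y fs) = Y"
    using msum_mor[of fs X Y] Cons.prems assms by auto
  have "cmp C g (msum C X Y (f # fs)) = add C (cmp C g f) (cmp C g (msum C X Y fs))"
    using m Cons.prems[of f] assms by simp
  then show ?case using Cons by simp
qed

lemma cmp_msum_r: assumes "\<And>f. f \<in> set fs \<Longrightarrow> mor f \<and> sr f = X \<and> tg f = Y" "X \<in> Obj C" "Y \<in> Obj C"
    "mor h" "tg h = X"
  shows "cmp C (msum C X Y fs) h = msum C (sr h) Y (map (\<lambda>f. cmp C f h) fs)"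
  using assms(1)
proof (induction fs)
  case Nil then show ?case using assms by simp
next
  case (Cons f fs)
  have m: "mor (msum C X Y fs) \<and> sr (msum C X Y fs) = X \<and> tg (msum C X Y fs) = Y"
    using msum_mor[of fs X Y] Cons.prems assms by auto
  have "cmp C (msum C X Y (f # fs)) h = add C (cmp C f h) (cmp C (msum C X Y fs) h)"
    using m Cons.prems[of f] assms by simp
  then show ?case using Cons by simp
qed

lemma msum_zero: assumes "\<And>k. k \<in> set ks \<Longrightarrow> F k = zer C X Y" "X \<in> Obj C" "Y \<in> Obj C"
  shows "msum C X Y (map F ks) = zer C X Y"
  using assms(1) by (induction ks) (use assms(2,3) in auto)

lemma msum_delta: assumes "distinct ks" "i \<in> set ks" "\<And>k. k \<in> set ks \<Longrightarrow> k \<noteq> i \<Longrightarrow> F k = zer C X Y"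
   "mor (F i)" "sr (F i) = X" "tg (F i) = Y"
  shows "msum C X Y (map F ks) = F i"
  using assms(1-3)
proof (induction ks)
  case Nil then show ?case by simp
next
  case (Cons a ks)
  have ob: "X \<in> Obj C" "Y \<in> Obj C" using assms(4-6) mor_objs by auto
  show ?case
  proof (cases "a = i")
    case True
    have "msum C X Y (map F ks) = zer C X Y"
      by (rule msum_zero) (use Cons.prems True ob in auto)
    then show ?thesis using True assms(4-6) by simp
  next
    case False
    have "msum C X Y (map F ks) = F i" using Cons False by auto
    moreover have "F a = zer C X Y" using Cons.prems False by auto
    ultimately show ?thesis using assms(4-6) by simp
  qed
qed

lemma dsumD: assumes "is_dsum C S Xs ins prs"
  shows "S \<in> Obj C" "length ins = length Xs" "length prs = length Xs"
   "\<And>k. k < length Xs \<Longrightarrow> Xs!k \<in> Obj C \<and> mor (ins!k) \<and> sr (ins!k) = Xs!k \<and> tg (ins!k) = S \<and>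
        mor (prs!k) \<and> sr (prs!k) = S \<and> tg (prs!k) = Xs!k"
   "\<And>k l. k < length Xs \<Longrightarrow> l < length Xs \<Longrightarrow>
        cmp C (prs!k) (ins!l) = (if k = l then idm C (Xs!k) else zer C (Xs!l) (Xs!k))"
   "msum C S S (map (\<lambda>k. cmp C (ins!k) (prs!k)) [0..<length Xs]) = idm C S"
proof -
  have D: "S \<in> Obj C \<and> length ins = length Xs \<and> length prs = length Xs \<and>
     (\<forall>k<length Xs. Xs ! k \<in> Obj C \<and> ins ! k \<in> Hom C (Xs ! k) S \<and> prs ! k \<in> Hom C S (Xs ! k)) \<and>
     (\<forall>k<length Xs. \<forall>l<length Xs.
        cmp C (prs ! k) (ins ! l) = (if k = l then idm C (Xs ! k) else zer C (Xs ! l) (Xs ! k))) \<and>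
     msum C S S (map (\<lambda>k. cmp C (ins ! k) (prs ! k)) [0..<length Xs]) = idm C S"
    using assms unfolding is_dsum_def .
  then show "S \<in> Obj C" "length ins = length Xs" "length prs = length Xs"
    "msum C S S (map (\<lambda>k. cmp C (ins!k) (prs!k)) [0..<length Xs]) = idm C S" by blast+
  show "\<And>k. k < length Xs \<Longrightarrow> Xs!k \<in> Obj C \<and> mor (ins!k) \<and> sr (ins!k) = Xs!k \<and> tg (ins!k) = S \<and>
        mor (prs!k) \<and> sr (prs!k) = S \<and> tg (prs!k) = Xs!k"
    using D hom_iff by blast
  show "\<And>k l. k < length Xs \<Longrightarrow> l < length Xs \<Longrightarrow>
        cmp C (prs!k) (ins!l) = (if k = l then idm C (Xs!k) else zer C (Xs!l) (Xs!k))"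
    using D by blast
qed

lemma dsumI: assumes "S \<in> Obj C" "length ins = length Xs" "length prs = length Xs"
   "\<And>k. k < length Xs \<Longrightarrow> Xs!k \<in> Obj C \<and> mor (ins!k) \<and> sr (ins!k) = Xs!k \<and> tg (ins!k) = S \<and>
        mor (prs!k) \<and> sr (prs!k) = S \<and> tg (prs!k) = Xs!k"
   "\<And>k l. k < length Xs \<Longrightarrow> l < length Xs \<Longrightarrow>
        cmp C (prs!k) (ins!l) = (if k = l then idm C (Xs!k) else zer C (Xs!l) (Xs!k))"
   "msum C S S (map (\<lambda>k. cmp C (ins!k) (prs!k)) [0..<length Xs]) = idm C S"
  shows "is_dsum C S Xs ins prs"
  unfolding is_dsum_def
proof (intro conjI allI impI)
  fix k assume "k < length Xs"
  then show "Xs ! k \<in> Obj C" "ins ! k \<in> Hom C (Xs ! k) S" "prs ! k \<in> Hom C S (Xs ! k)"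
    using assms(4)[of k] hom_iff by auto
qed (use assms in auto)

end


context kc begin

lemma zcancel: assumes "cmp C p i = zer C (sr i) (tg p)" "mor p" "mor i" "tg i = sr p" "mor x" "tg x = sr i"
  shows "cmp C p (cmp C i x) = zer C (sr x) (tg p)"
proof -
  have "cmp C p (cmp C i x) = cmp C (cmp C p i) x" by (rule assoc_r[symmetric]) (use assms in auto)
  also have "\<dots> = cmp C (zer C (sr i) (tg p)) x" by (simp only: assms(1))
  also have "\<dots> = zer C (sr x) (tg p)" using assms by simp
  finally show ?thesis .
qed

lemma dsum_exists: assumes add: "is_additive C" shows "set Zs \<subseteq> Obj C \<Longrightarrow> \<exists>T ins prs. is_dsum C T Zs ins prs"
proof (induction Zs)
  case Nil then show ?case using add unfolding is_additive_def by blast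
next
  case (Cons Z Zs)
  then obtain B i' p' where dB: "is_dsum C B Zs i' p'" by auto
  note DB = dsumD[OF dB]
  have Z: "Z \<in> Obj C" using Cons.prems by auto
  obtain S ins2 prs2 where "is_dsum C S [Z, B] ins2 prs2" using add Z DB(1) unfolding is_additive_def by blast
  then obtain a1 a2 b1 b2 where d:
    "mor a1" "sr a1 = Z" "tg a1 = S" "mor a2" "sr a2 = B" "tg a2 = S"
    "mor b1" "sr b1 = S" "tg b1 = Z" "mor b2" "sr b2 = S" "tg b2 = B"
    and r: "cmp C b1 a1 = idm C Z" "cmp C b2 a2 = idm C B" "cmp C b1 a2 = zer C B Z" "cmp C b2 a1 = zer C Z B"
    and m: "add C (cmp C a1 b1) (cmp C a2 b2) = idm C S"
    by (rule dsum2)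
  have S: "S \<in> Obj C" using d mor_objs by auto
  have B: "B \<in> Obj C" by (rule DB(1))
  have c2: "cmp C b2 (cmp C a2 x) = x" if "mor x" "tg x = B" for x using cancel[of b2 a2 x] d r that by simp
  have c3: "cmp C b1 (cmp C a2 x) = zer C (sr x) Z" if "mor x" "tg x = B" for x using zcancel[of b1 a2 x] d r that by simp
  let ?m = "length Zs"
  define ins where "ins = a1 # map (\<lambda>k. cmp C a2 (i'!k)) [0..<?m]"
  define prs where "prs = b1 # map (\<lambda>k. cmp C (p'!k) b2) [0..<?m]"
  have ins0: "ins!0 = a1" and insS: "\<And>k. k < ?m \<Longrightarrow> ins!(Suc k) = cmp C a2 (i'!k)" unfolding ins_def by auto
  have prs0: "prs!0 = b1" and prsS: "\<And>k. k < ?m \<Longrightarrow> prs!(Suc k) = cmp C (p'!k) b2" unfolding prs_def by auto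
  have "is_dsum C S (Z # Zs) ins prs"
  proof (rule dsumI)
    show "S \<in> Obj C" by fact
    show "length ins = length (Z # Zs)" "length prs = length (Z # Zs)" unfolding ins_def prs_def by auto
  next
    fix k assume k: "k < length (Z # Zs)"
    show "(Z # Zs) ! k \<in> Obj C \<and> mor (ins ! k) \<and> sr (ins ! k) = (Z # Zs) ! k \<and> tg (ins ! k) = S \<and>
          mor (prs ! k) \<and> sr (prs ! k) = S \<and> tg (prs ! k) = (Z # Zs) ! k"
    proof (cases k)
      case 0 then show ?thesis using ins0 prs0 d Z by simp
    next
      case (Suc k')
      then have k': "k' < ?m" using k by simp
      show ?thesis using Suc insS[OF k'] prsS[OF k'] DB(4)[OF k'] d by simp
    qed
  next
    fix k l assume k: "k < length (Z # Zs)" and l: "l < length (Z # Zs)"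
    show "cmp C (prs ! k) (ins ! l) = (if k = l then idm C ((Z # Zs) ! k) else zer C ((Z # Zs) ! l) ((Z # Zs) ! k))"
    proof (cases k)
      case 0
      show ?thesis
      proof (cases l)
        case 0 then show ?thesis using \<open>k = 0\<close> ins0 prs0 r by simp
      next
        case (Suc l')
        then have l': "l' < ?m" using l by simp
        show ?thesis using \<open>k = 0\<close> Suc insS[OF l'] prs0 DB(4)[OF l'] c3[of "i'!l'"] by simp
      qed
    next
      case (Suc k')
      then have k': "k' < ?m" using k by simp
      show ?thesis
      proof (cases l)
        case 0 then show ?thesis using Suc ins0 prsS[OF k'] DB(4)[OF k'] d r Z by simp
      next
        case (Suc l')
        then have l': "l' < ?m" using l by simp
        show ?thesis using \<open>k = Suc k'\<close> Suc insS[OF l'] prsS[OF k'] DB(4)[OF k'] DB(4)[OF l'] DB(5)[OF k' l'] d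
            c2[of "i'!l'"] by simp
      qed
    qed
  next
    have fs: "\<And>f. f \<in> set (map (\<lambda>i. cmp C (i'!i) (p'!i)) [0..<?m]) \<Longrightarrow> mor f \<and> sr f = B \<and> tg f = B"
      using DB(4) by auto
    have fs2: "\<And>f. f \<in> set (map (\<lambda>f. cmp C f b2) (map (\<lambda>i. cmp C (i'!i) (p'!i)) [0..<?m])) \<Longrightarrow> mor f \<and> sr f = S \<and> tg f = B"
      using DB(4) d by auto
    have e1: "cmp C (msum C B B (map (\<lambda>i. cmp C (i'!i) (p'!i)) [0..<?m])) b2
        = msum C S B (map (\<lambda>f. cmp C f b2) (map (\<lambda>i. cmp C (i'!i) (p'!i)) [0..<?m]))"
      using cmp_msum_r[where fs="map (\<lambda>i. cmp C (i'!i) (p'!i)) [0..<?m]" and X=B and Y=B and h=b2, OF fs B B d(10) d(12)] d(11) by (simp only:)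
    have e2: "cmp C a2 (msum C S B (map (\<lambda>f. cmp C f b2) (map (\<lambda>i. cmp C (i'!i) (p'!i)) [0..<?m])))
       = msum C S S (map (cmp C a2) (map (\<lambda>f. cmp C f b2) (map (\<lambda>i. cmp C (i'!i) (p'!i)) [0..<?m])))"
      using cmp_msum_l[where fs="map (\<lambda>f. cmp C f b2) (map (\<lambda>i. cmp C (i'!i) (p'!i)) [0..<?m])" and X=S and Y=B and g=a2, OF fs2 S B d(4) d(5)] d(6) by (simp only:)
    have "cmp C a2 (cmp C (msum C B B (map (\<lambda>i. cmp C (i'!i) (p'!i)) [0..<?m])) b2)
        = msum C S S (map (cmp C a2) (map (\<lambda>f. cmp C f b2) (map (\<lambda>i. cmp C (i'!i) (p'!i)) [0..<?m])))"
      by (simp only: e1 e2)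
    also have "\<dots> = msum C S S (map (\<lambda>i. cmp C (ins!Suc i) (prs!Suc i)) [0..<?m])"
      unfolding map_map o_def
      by (rule arg_cong[where f = "msum C S S"], rule map_cong) (use insS prsS DB(4) d in auto)
    finally have E: "msum C S S (map (\<lambda>i. cmp C (ins!Suc i) (prs!Suc i)) [0..<?m]) = cmp C a2 b2"
      using DB(6) d by simp
    show "msum C S S (map (\<lambda>k. cmp C (ins ! k) (prs ! k)) [0..<length (Z # Zs)]) = idm C S"
      using E m ins0 prs0 by (simp add: map_upt_Suc del: upt_Suc)
  qed
  then show ?case by blast
qed


lemma msum_mor': "\<forall>f\<in>set fs. mor f \<and> sr f = X \<and> tg f = Y \<Longrightarrow> X \<in> Obj C \<Longrightarrow> Y \<in> Obj C \<Longrightarrow>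
  mor (msum C X Y fs) \<and> sr (msum C X Y fs) = X \<and> tg (msum C X Y fs) = Y"
  using msum_mor by blast
lemma cmp_msum_l': "\<forall>f\<in>set fs. mor f \<and> sr f = X \<and> tg f = Y \<Longrightarrow> X \<in> Obj C \<Longrightarrow> Y \<in> Obj C \<Longrightarrow>
    mor g \<Longrightarrow> sr g = Y \<Longrightarrow> cmp C g (msum C X Y fs) = msum C X (tg g) (map (cmp C g) fs)"
  using cmp_msum_l by blast
lemma cmp_msum_r': "\<forall>f\<in>set fs. mor f \<and> sr f = X \<and> tg f = Y \<Longrightarrow> X \<in> Obj C \<Longrightarrow> Y \<in> Obj C \<Longrightarrow>
    mor h \<Longrightarrow> tg h = X \<Longrightarrow> cmp C (msum C X Y fs) h = msum C (sr h) Y (map (\<lambda>f. cmp C f h) fs)"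
  using cmp_msum_r by blast

lemma reindex:
  assumes dX: "is_dsum C X (A # Ts) ins prs" and dT: "is_dsum C T Ts i' p'"
  defines "j \<equiv> msum C T X (map (\<lambda>k. cmp C (ins!Suc k) (p'!k)) [0..<length Ts])"
    and "q \<equiv> msum C X T (map (\<lambda>k. cmp C (i'!k) (prs!Suc k)) [0..<length Ts])"
  shows "is_dsum C X [A, T] [ins!0, j] [prs!0, q]"
proof -
  let ?m = "length Ts"
  note DX = dsumD[OF dX] and DT = dsumD[OF dT]
  have X: "X \<in> Obj C" and T: "T \<in> Obj C" using DX(1) DT(1) .
  have i0: "mor (ins!0)" "sr (ins!0) = A" "tg (ins!0) = X" "mor (prs!0)" "sr (prs!0) = X" "tg (prs!0) = A" "A \<in> Obj C"
    using DX(4)[of 0] by auto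
  have iS: "\<And>k. k < ?m \<Longrightarrow> mor (ins!Suc k) \<and> sr (ins!Suc k) = Ts!k \<and> tg (ins!Suc k) = X \<and>
      mor (prs!Suc k) \<and> sr (prs!Suc k) = X \<and> tg (prs!Suc k) = Ts!k \<and> Ts!k \<in> Obj C"
    using DX(4) by fastforce
  have iT: "\<And>k. k < ?m \<Longrightarrow> mor (i'!k) \<and> sr (i'!k) = Ts!k \<and> tg (i'!k) = T \<and>
      mor (p'!k) \<and> sr (p'!k) = T \<and> tg (p'!k) = Ts!k"
    using DT(4) by blast
  have rX: "\<And>k l. k < ?m \<Longrightarrow> l < ?m \<Longrightarrow> cmp C (prs!Suc k) (ins!Suc l) = (if k = l then idm C (Ts!k) else zer C (Ts!l) (Ts!k))"
    using DX(5) by fastforce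
  have rX0: "\<And>k. k < ?m \<Longrightarrow> cmp C (prs!Suc k) (ins!0) = zer C A (Ts!k)"
    using DX(5) by fastforce
  have rX0': "\<And>k. k < ?m \<Longrightarrow> cmp C (prs!0) (ins!Suc k) = zer C (Ts!k) A"
    using DX(5) by fastforce
  have js: "\<forall>f \<in> set (map (\<lambda>k. cmp C (ins!Suc k) (p'!k)) [0..<?m]). mor f \<and> sr f = T \<and> tg f = X"
    using iS iT by auto
  have qs: "\<forall>f \<in> set (map (\<lambda>k. cmp C (i'!k) (prs!Suc k)) [0..<?m]). mor f \<and> sr f = X \<and> tg f = T"
    using iS iT by auto
  have jm: "mor j" "sr j = T" "tg j = X" using msum_mor'[OF js T X] unfolding j_def by auto
  have qm: "mor q" "sr q = X" "tg q = T" using msum_mor'[OF qs X T] unfolding q_def by auto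
  have q_ins: "cmp C q (ins!Suc k) = i'!k" if k: "k < ?m" for k
  proof -
    have "cmp C q (ins!Suc k) = msum C (Ts!k) T (map (\<lambda>f. cmp C f (ins!Suc k)) (map (\<lambda>k. cmp C (i'!k) (prs!Suc k)) [0..<?m]))"
      unfolding q_def using cmp_msum_r'[OF qs X T, of "ins!Suc k"] iS[OF k] by simp
    also have "\<dots> = msum C (Ts!k) T (map (\<lambda>l. cmp C (i'!l) (cmp C (prs!Suc l) (ins!Suc k))) [0..<?m])"
      unfolding map_map o_def
      by (rule arg_cong[where f = "msum C (Ts!k) T"], rule map_cong) (use iS iT k in auto)
    also have "\<dots> = cmp C (i'!k) (cmp C (prs!Suc k) (ins!Suc k))"
      by (rule msum_delta) (use k iT iS rX in auto)
    also have "\<dots> = i'!k" using rX[OF k k] iT[OF k] by simp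
    finally show ?thesis .
  qed
  have q_ins0: "cmp C q (ins!0) = zer C A T"
  proof -
    have "cmp C q (ins!0) = msum C A T (map (\<lambda>f. cmp C f (ins!0)) (map (\<lambda>k. cmp C (i'!k) (prs!Suc k)) [0..<?m]))"
      unfolding q_def using cmp_msum_r'[OF qs X T, of "ins!0"] i0 by simp
    also have "\<dots> = msum C A T (map (\<lambda>l. cmp C (i'!l) (cmp C (prs!Suc l) (ins!0))) [0..<?m])"
      unfolding map_map o_def
      by (rule arg_cong[where f = "msum C A T"], rule map_cong) (use iS iT i0 in auto)
    also have "\<dots> = zer C A T"
      by (rule msum_zero) (use iT iS rX0 i0 T in auto)
    finally show ?thesis .
  qed
  have p_j: "cmp C (prs!Suc k) j = p'!k" if k: "k < ?m" for k
  proof -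
    have "cmp C (prs!Suc k) j = msum C T (Ts!k) (map (cmp C (prs!Suc k)) (map (\<lambda>k. cmp C (ins!Suc k) (p'!k)) [0..<?m]))"
      unfolding j_def using cmp_msum_l'[OF js T X, of "prs!Suc k"] iS[OF k] by simp
    also have "\<dots> = msum C T (Ts!k) (map (\<lambda>l. cmp C (cmp C (prs!Suc k) (ins!Suc l)) (p'!l)) [0..<?m])"
      unfolding map_map o_def
      by (rule arg_cong[where f = "msum C T (Ts!k)"], rule map_cong) (use iS iT k in auto)
    also have "\<dots> = cmp C (cmp C (prs!Suc k) (ins!Suc k)) (p'!k)"
      by (rule msum_delta) (use k iT iS rX in auto)
    also have "\<dots> = p'!k" using rX[OF k k] iT[OF k] by simp
    finally show ?thesis .
  qed
  have p0_j: "cmp C (prs!0) j = zer C T A"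
  proof -
    have "cmp C (prs!0) j = msum C T A (map (cmp C (prs!0)) (map (\<lambda>k. cmp C (ins!Suc k) (p'!k)) [0..<?m]))"
      unfolding j_def using cmp_msum_l'[OF js T X, of "prs!0"] i0 by simp
    also have "\<dots> = msum C T A (map (\<lambda>l. cmp C (cmp C (prs!0) (ins!Suc l)) (p'!l)) [0..<?m])"
      unfolding map_map o_def
      by (rule arg_cong[where f = "msum C T A"], rule map_cong) (use iS iT i0 in auto)
    also have "\<dots> = zer C T A"
      by (rule msum_zero) (use iT iS rX0' i0 T in auto)
    finally show ?thesis .
  qed
  have q_ins': "cmp C q (cmp C (ins!Suc k) x) = cmp C (i'!k) x" if k: "k < ?m" and x: "mor x" "tg x = Ts!k" for k x
  proof -
    have "cmp C q (cmp C (ins!Suc k) x) = cmp C (cmp C q (ins!Suc k)) x"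
      by (rule assoc_r[symmetric]) (use qm iS[OF k] x in auto)
    then show ?thesis using q_ins[OF k] by simp
  qed
  have pj': "cmp C (p'!k) q = prs!Suc k" if k: "k < ?m" for k
  proof -
    have "cmp C (p'!k) q = msum C X (Ts!k) (map (cmp C (p'!k)) (map (\<lambda>k. cmp C (i'!k) (prs!Suc k)) [0..<?m]))"
      unfolding q_def using cmp_msum_l'[OF qs X T, of "p'!k"] iT[OF k] by simp
    also have "\<dots> = msum C X (Ts!k) (map (\<lambda>l. cmp C (cmp C (p'!k) (i'!l)) (prs!Suc l)) [0..<?m])"
      unfolding map_map o_def
      by (rule arg_cong[where f = "msum C X (Ts!k)"], rule map_cong) (use iS iT k in auto)
    also have "\<dots> = cmp C (cmp C (p'!k) (i'!k)) (prs!Suc k)"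
      by (rule msum_delta) (use k iT iS DT(5) in auto)
    also have "\<dots> = prs!Suc k" using DT(5)[OF k k] iS[OF k] by simp
    finally show ?thesis .
  qed
  have qj: "cmp C q j = idm C T"
  proof -
    have "cmp C q j = msum C T T (map (cmp C q) (map (\<lambda>k. cmp C (ins!Suc k) (p'!k)) [0..<?m]))"
      unfolding j_def using cmp_msum_l'[OF js T X, of q] qm by simp
    also have "\<dots> = msum C T T (map (\<lambda>k. cmp C (i'!k) (p'!k)) [0..<?m])"
      unfolding map_map o_def
      by (rule arg_cong[where f = "msum C T T"], rule map_cong) (use iS iT q_ins' in auto)
    also have "\<dots> = idm C T" using DT(6) DT(2,3) by simp
    finally show ?thesis .
  qed
  have jq: "cmp C j q = msum C X X (map (\<lambda>k. cmp C (ins!Suc k) (prs!Suc k)) [0..<?m])"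
  proof -
    have "cmp C j q = msum C X X (map (\<lambda>f. cmp C f q) (map (\<lambda>k. cmp C (ins!Suc k) (p'!k)) [0..<?m]))"
      unfolding j_def using cmp_msum_r'[OF js T X, of q] qm by simp
    also have "\<dots> = msum C X X (map (\<lambda>k. cmp C (ins!Suc k) (prs!Suc k)) [0..<?m])"
      unfolding map_map o_def
      by (rule arg_cong[where f = "msum C X X"], rule map_cong) (use iS iT qm pj' in auto)
    finally show ?thesis .
  qed
  have lenX: "length ins = Suc ?m" "length prs = Suc ?m" using DX(2,3) by auto
  have sumX: "add C (cmp C (ins!0) (prs!0)) (msum C X X (map (\<lambda>k. cmp C (ins!Suc k) (prs!Suc k)) [0..<?m])) = idm C X"
    using DX(6) by (simp add: map_upt_Suc del: upt_Suc)
  have jqm: "mor (cmp C j q)" "sr (cmp C j q) = X" "tg (cmp C j q) = X" using jm qm by auto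
  have two: "[0..<2] = [0::nat, 1]" by (simp add: upt_rec)
  show ?thesis
  proof (rule dsumI)
    fix k assume "k < length [A, T]"
    then have "k = 0 \<or> k = 1" by auto
    then show "[A, T] ! k \<in> Obj C \<and> mor ([ins ! 0, j] ! k) \<and> sr ([ins ! 0, j] ! k) = [A, T] ! k \<and>
         tg ([ins ! 0, j] ! k) = X \<and> mor ([prs ! 0, q] ! k) \<and> sr ([prs ! 0, q] ! k) = X \<and> tg ([prs ! 0, q] ! k) = [A, T] ! k"
      using i0 jm qm T by auto
  next
    fix k l assume "k < length [A, T]" "l < length [A, T]"
    then have "k = 0 \<or> k = 1" "l = 0 \<or> l = 1" by auto
    then show "cmp C ([prs ! 0, q] ! k) ([ins ! 0, j] ! l) = (if k = l then idm C ([A, T] ! k) else zer C ([A, T] ! l) ([A, T] ! k))"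
      using DX(5)[of 0 0] q_ins0 p0_j qj by auto
  next
    show "msum C X X (map (\<lambda>k. cmp C ([ins ! 0, j] ! k) ([prs ! 0, q] ! k)) [0..<length [A, T]]) = idm C X"
      using sumX jq jqm by (simp add: two)
  qed (use X in auto)
qed

end


context kc begin

lemma conj_iso:
  assumes i: "mor i" "sr i = A" "tg i = X" and p: "mor p" "sr p = X" "tg p = A"
    and pi: "cmp C p i = idm C A" and ip: "cmp C i p = idm C X"
    and h: "mor h" "sr h = X" "tg h = X" and iso: "is_iso C A A (cmp C p (cmp C h i))"
  shows "is_iso C X X h"
proof -
  define k where "k = cmp C p (cmp C h i)"
  have km: "mor k" "sr k = A" "tg k = A" unfolding k_def using i p h by auto
  obtain g where g: "mor g" "sr g = A" "tg g = A" "cmp C g k = idm C A" "cmp C k g = idm C A"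
    using isoD[OF iso[folded k_def]] by blast
  have ob: "A \<in> Obj C" "X \<in> Obj C" using i mor_objs by auto
  have c_ip: "cmp C i (cmp C p x) = x" if "mor x" "tg x = X" for x using cancel[of i p x] i p ip that by simp
  have c_pi: "cmp C p (cmp C i x) = x" if "mor x" "tg x = A" for x using cancel[of p i x] i p pi that by simp
  have c_gk: "cmp C g (cmp C k x) = x" if "mor x" "tg x = A" for x using cancel[of g k x] g km that by simp
  have c_kg: "cmp C k (cmp C g x) = x" if "mor x" "tg x = A" for x using cancel[of k g x] g km that by simp
  have hk: "h = cmp C i (cmp C k p)"
    unfolding k_def using i p h ip c_ip[of h] by simp
  show ?thesis
  proof (rule isoI[where g = "cmp C i (cmp C g p)"])
    show "cmp C (cmp C i (cmp C g p)) h = idm C X"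
      apply (subst hk) using i p g km c_pi[of "cmp C k p"] c_gk[of p] ip by simp
    show "cmp C h (cmp C i (cmp C g p)) = idm C X"
      apply (subst hk) using i p g km c_pi[of "cmp C g p"] c_kg[of p] ip by simp
  qed (use i p g h in auto)
qed

lemma local_transfer:
  assumes L: "local_end C A" and i: "mor i" "sr i = A" "tg i = X" and p: "mor p" "sr p = X" "tg p = A"
    and pi: "cmp C p i = idm C A" and ip: "cmp C i p = idm C X"
  shows "local_end C X"
proof -
  have ob: "A \<in> Obj C" "X \<in> Obj C" using i mor_objs by auto
  have nA: "idm C A \<noteq> zer C A A" using L unfolding local_end_def by blast
  have nX: "idm C X \<noteq> zer C X X"
  proof
    assume e: "idm C X = zer C X X"
    have "idm C A = cmp C p (cmp C (idm C X) i)" using pi i p by simp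
    also have "\<dots> = cmp C p (cmp C (zer C X X) i)" by (simp only: e)
    also have "\<dots> = zer C A A" using i p ob by simp
    finally show False using nA by simp
  qed
  show ?thesis unfolding local_end_def
  proof (intro conjI ballI)
    fix f assume "f \<in> Hom C X X"
    then have f: "mor f" "sr f = X" "tg f = X" using hom_iff by auto
    have "is_iso C A A (cmp C p (cmp C f i)) \<or> is_iso C A A (add C (idm C A) (neg C (cmp C p (cmp C f i))))"
      by (rule local_endD[OF L]) (use i p f in auto)
    then show "is_iso C X X f \<or> is_iso C X X (add C (idm C X) (neg C f))"
    proof
      assume "is_iso C A A (cmp C p (cmp C f i))"
      then show ?thesis using conj_iso[OF i p pi ip f] by blast
    next
      assume a: "is_iso C A A (add C (idm C A) (neg C (cmp C p (cmp C f i))))"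
      have "cmp C p (cmp C (add C (idm C X) (neg C f)) i) = add C (idm C A) (neg C (cmp C p (cmp C f i)))"
        using i p f pi ob by simp
      then have "is_iso C X X (add C (idm C X) (neg C f))"
        using conj_iso[OF i p pi ip, of "add C (idm C X) (neg C f)"] a f ob by simp
      then show ?thesis by blast
    qed
  qed (use ob nX in auto)
qed

end

lemma indec_local: assumes hf: "hf_ks_triangulated_kcat C" and ind: "indecomposable C X" shows "local_end C X"
proof -
  have H: "is_category C" "is_klinear C" "is_additive C" "krull_schmidt C"
    using hf unfolding hf_ks_triangulated_kcat_def by auto
  interpret kc C by (rule kc.intro) (use H in auto)
  have X: "X \<in> Obj C" and nX: "idm C X \<noteq> zer C X X"
    and indA: "\<And>A B ins prs. is_dsum C X [A, B] ins prs \<Longrightarrow> idm C A = zer C A A \<or> idm C B = zer C B B"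
    using ind unfolding indecomposable_def by blast+
  obtain Xs ins prs where d: "is_dsum C X Xs ins prs" and loc: "\<forall>A\<in>set Xs. local_end C A"
    using H(4) X unfolding krull_schmidt_def by blast
  note D = dsumD[OF d]
  show ?thesis
  proof (cases Xs)
    case Nil
    then show ?thesis using D(6) nX by simp
  next
    case (Cons A Ts)
    have "set Ts \<subseteq> Obj C"
    proof
      fix Z assume "Z \<in> set Ts"
      then obtain k where "k < length Ts" "Ts!k = Z" by (auto simp: in_set_conv_nth)
      then show "Z \<in> Obj C" using D(4)[of "Suc k"] Cons by auto
    qed
    then obtain T i' p' where dT: "is_dsum C T Ts i' p'" using dsum_exists[OF H(3)] by blast
    define j where "j = msum C T X (map (\<lambda>k. cmp C (ins!Suc k) (p'!k)) [0..<length Ts])"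
    define q where "q = msum C X T (map (\<lambda>k. cmp C (i'!k) (prs!Suc k)) [0..<length Ts])"
    have d2: "is_dsum C X [A, T] [ins!0, j] [prs!0, q]"
      unfolding j_def q_def by (rule reindex) (use d Cons dT in auto)
    have LA: "local_end C A" using loc Cons by auto
    then have nA: "idm C A \<noteq> zer C A A" unfolding local_end_def by blast
    have eT: "idm C T = zer C T T" using indA[OF d2] nA by blast
    obtain i1 i2 p1 p2 where e: "[ins!0, j] = [i1, i2]" "[prs!0, q] = [p1, p2]"
      and m: "mor i1" "sr i1 = A" "tg i1 = X" "mor i2" "sr i2 = T" "tg i2 = X"
      "mor p1" "sr p1 = X" "tg p1 = A" "mor p2" "sr p2 = X" "tg p2 = T"
      and r: "cmp C p1 i1 = idm C A" and s: "add C (cmp C i1 p1) (cmp C i2 p2) = idm C X"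
      by (rule dsum2[OF d2])
    have ob: "T \<in> Obj C" using m mor_objs by auto
    have "cmp C i2 p2 = cmp C (cmp C i2 (idm C T)) p2" using m by simp
    also have "\<dots> = cmp C (cmp C i2 (zer C T T)) p2" by (simp only: eT)
    also have "\<dots> = zer C X X" using m ob X by simp
    finally have "cmp C i1 p1 = idm C X" using s m by simp
    then show ?thesis using local_transfer[OF LA m(1-3) m(7-9) r] by simp
  qed
qed


theorem lemma4p6:
  fixes C :: "('o, 'm, 'k::alg_closed_field, 'z) tcat_scheme"
    and I :: "'o \<Rightarrow> 'o \<Rightarrow> 'm set"
    and X Y :: 'o and f :: 'm
  assumes "hf_ks_triangulated_kcat C"
    and "is_ideal C I"
    and "indecomposable C X" and "indecomposable C Y"
    and "f \<in> Hom C X Y"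
  shows "(left_irr C I X Y f \<longleftrightarrow> f \<in> I X Y - iprod C (jrad C) I X Y)
       \<and> (right_irr C I X Y f \<longleftrightarrow> f \<in> I X Y - iprod C I (jrad C) X Y)
       \<and> (irr C I X Y f \<longleftrightarrow> f \<in> I X Y - (iprod C (jrad C) I X Y \<union> iprod C I (jrad C) X Y))"
proof -
  have H: "is_category C" "is_klinear C" "is_additive C"
    using assms(1) unfolding hf_ks_triangulated_kcat_def by auto
  interpret kc C by (rule kc.intro) (use H in auto)
  have I: "is_ideal C I" by fact
  have LX: "local_end C X" by (rule indec_local[OF assms(1) assms(3)])
  have LY: "local_end C Y" by (rule indec_local[OF assms(1) assms(4)])
  have nX: "idm C X \<noteq> zer C X X" and nY: "idm C Y \<noteq> zer C Y Y"
    using assms(3,4) unfolding indecomposable_def by auto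
  have f: "mor f" "sr f = X" "tg f = Y" using assms(5) hom_iff by auto
  have ob: "X \<in> Obj C" "Y \<in> Obj C" using f mor_objs by auto
  have part1: "left_irr C I X Y f \<longleftrightarrow> f \<in> I X Y - iprod C (jrad C) I X Y"
  proof
    assume L: "left_irr C I X Y f"
    have fI: "f \<in> I X Y" using L unfolding left_irr_def by blast
    moreover have "f \<notin> iprod C (jrad C) I X Y"
    proof
      assume "f \<in> iprod C (jrad C) I X Y"
      from iprod_single[OF J_ideal I H(3) this ob] obtain Z b a where
        Z: "Z \<in> Obj C" and b: "b \<in> I X Z" and a: "a \<in> jrad C Z Y" and fe: "f = cmp C a b" by blast
      have "split_epi C Z Y a" using L Z b a fe unfolding left_irr_def jrad_def by blast
      then obtain s where s: "mor s" "sr s = Y" "tg s = Z" "cmp C a s = idm C Y"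
        unfolding split_epi_def Bex_def hom_iff by blast
      have "cmp C a s \<in> jrad C Y Y" using J_comp_r[OF a, of s] s by simp
      then have "idm C Y = zer C Y Y" using rad_id ob s by simp
      then show False using nY by simp
    qed
    ultimately show "f \<in> I X Y - iprod C (jrad C) I X Y" by blast
  next
    assume fm: "f \<in> I X Y - iprod C (jrad C) I X Y"
    show "left_irr C I X Y f" unfolding left_irr_def
    proof (intro conjI allI impI)
      show "f \<in> I X Y" using fm by blast
      fix Z h1 h2 assume Z: "Z \<in> Obj C" and h1: "h1 \<in> I X Z" and h2: "h2 \<in> Hom C Z Y" and fe: "f = cmp C h2 h1"
      have h1m: "mor h1" "sr h1 = X" "tg h1 = Z" using idealD(1)[OF I h1] by auto
      have h2m: "mor h2" "sr h2 = Z" "tg h2 = Y" using h2 hom_iff by auto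
      show "split_epi C Z Y h2"
      proof (cases "h2 \<in> jrad C Z Y")
        case True
        have "add C (cmp C h2 h1) (zer C X Y) \<in> iprod C (jrad C) I X Y"
          by (rule iprod_step[OF iprod_zero[where C=C and A="jrad C" and B=I and X=X and Y=Y] Z h1 True])
        then have "f \<in> iprod C (jrad C) I X Y" using fe h1m h2m ob by simp
        then show ?thesis using fm by blast
      next
        case False
        then obtain g where g: "mor g" "sr g = Y" "tg g = Z" and ni: "\<not> is_iso C Z Z (add C (idm C Z) (neg C (cmp C g h2)))"
          using h2m unfolding jrad_iff by blast
        have "\<not> is_iso C Y Y (add C (idm C Y) (neg C (cmp C h2 g)))"
          using ab_ba[of h2 Z Y g] h2m g ni by blast
        then have "is_iso C Y Y (cmp C h2 g)" using local_endD[OF LY, of "cmp C h2 g"] g h2m by auto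
        then obtain u where u: "mor u" "sr u = Y" "tg u = Y" "cmp C (cmp C h2 g) u = idm C Y" using isoD by blast
        show ?thesis unfolding split_epi_def Bex_def
          using h2 u g h2m by (intro conjI exI[of _ "cmp C g u"]) (simp_all add: hom_iff)
      qed
    qed
  qed
  have part2: "right_irr C I X Y f \<longleftrightarrow> f \<in> I X Y - iprod C I (jrad C) X Y"
  proof
    assume L: "right_irr C I X Y f"
    have fI: "f \<in> I X Y" using L unfolding right_irr_def by blast
    moreover have "f \<notin> iprod C I (jrad C) X Y"
    proof
      assume "f \<in> iprod C I (jrad C) X Y"
      from iprod_single[OF I J_ideal H(3) this ob] obtain Z b a where
        Z: "Z \<in> Obj C" and b: "b \<in> jrad C X Z" and a: "a \<in> I Z Y" and fe: "f = cmp C a b" by blast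
      have "split_mono C X Z b" using L Z b a fe unfolding right_irr_def jrad_def by blast
      then obtain r where r: "mor r" "sr r = Z" "tg r = X" "cmp C r b = idm C X"
        unfolding split_mono_def Bex_def hom_iff by blast
      have "cmp C r b \<in> jrad C X X" using J_comp_l[OF b, of r] r by simp
      then have "idm C X = zer C X X" using rad_id ob r by simp
      then show False using nX by simp
    qed
    ultimately show "f \<in> I X Y - iprod C I (jrad C) X Y" by blast
  next
    assume fm: "f \<in> I X Y - iprod C I (jrad C) X Y"
    show "right_irr C I X Y f" unfolding right_irr_def
    proof (intro conjI allI impI)
      show "f \<in> I X Y" using fm by blast
      fix Z h1 h2 assume Z: "Z \<in> Obj C" and h1: "h1 \<in> Hom C X Z" and h2: "h2 \<in> I Z Y" and fe: "f = cmp C h2 h1"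
      have h1m: "mor h1" "sr h1 = X" "tg h1 = Z" using h1 hom_iff by auto
      have h2m: "mor h2" "sr h2 = Z" "tg h2 = Y" using idealD(1)[OF I h2] by auto
      show "split_mono C X Z h1"
      proof (cases "h1 \<in> jrad C X Z")
        case True
        have "add C (cmp C h2 h1) (zer C X Y) \<in> iprod C I (jrad C) X Y"
          by (rule iprod_step[OF iprod_zero[where C=C and A=I and B="jrad C" and X=X and Y=Y] Z True h2])
        then have "f \<in> iprod C I (jrad C) X Y" using fe h1m h2m ob by simp
        then show ?thesis using fm by blast
      next
        case False
        then obtain g where g: "mor g" "sr g = Z" "tg g = X" and ni: "\<not> is_iso C X X (add C (idm C X) (neg C (cmp C g h1)))"
          using h1m unfolding jrad_iff by blast
        then have "is_iso C X X (cmp C g h1)" using local_endD[OF LX, of "cmp C g h1"] g h1m by auto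
        then obtain u where u: "mor u" "sr u = X" "tg u = X" "cmp C u (cmp C g h1) = idm C X" using isoD by blast
        show ?thesis unfolding split_mono_def Bex_def
          using h1 u g h1m by (intro conjI exI[of _ "cmp C u g"]) (simp_all add: hom_iff)
      qed
    qed
  qed
  show ?thesis using part1 part2 unfolding irr_def by blast
qed


end
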